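(* Let $0 \le l < k < n$ and let $\theta, \mu$ be real numbers with $\theta \ge \mu$ and $\theta > 0$. For $\kappa = (\kappa_1,\dots,\kappa_n) \in \mathbb{R}^n$ put $\lambda_i = \theta \sum_{j=1}^n \kappa_j - \mu \kappa_i$, and suppose $\lambda = (\lambda_1,\dots,\lambda_n) \in \Gamma_k$. Define \[ F(\kappa) = \frac{\sigma_k(\lambda)}{\sigma_l(\lambda)}, \qquad F^{ii} = \frac{\partial F}{\partial \kappa_i}(\kappa), \] and suppose $\kappa_1 \ge \kappa_2 \ge \cdots \ge \kappa_n$. Then there is a constant $c_1 = c_1(n,k,l,\theta,\mu) > 0$ such that \[ F^{11} \ge c_1 \sum_{i=1}^n F^{ii}, \] and, for any $m > 0$ with $F(\kappa) \ge m$, a constant $c_2 = c_2(n,k,l,\theta,\mu,m) > 0$ such that \[ \sum_{i=1}^n F^{ii} \ge c_2 . \]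
   Context: $\sigma_j$ denotes the $j$-th elementary symmetric polynomial on $\mathbb{R}^n$, with $\sigma_0 = 1$; $\Gamma_k = \{x \in \mathbb{R}^n : \sigma_j(x) > 0 \text{ for } 1 \le j \le k\}$. The $\kappa_i$ are the eigenvalues of a (diagonal) symmetric matrix $W$, and the $\lambda_i$ are then the eigenvalues of $\theta\,\sigma_1(W) I - \mu W$. *)

theory Defs
  imports "HOL-Analysis.Analysis"
begin

text \<open>Vectors in R^n are represented as functions nat => real; only indices 0..n-1 matter
  (the paper's index i corresponds to i-1 here).\<close>

definition esym :: "nat \<Rightarrow> nat \<Rightarrow> (nat \<Rightarrow> real) \<Rightarrow> real" where
  "esym n j x = (\<Sum>S\<in>{S. S \<subseteq> {..<n} \<and> card S = j}. \<Prod>i\<in>S. x i)"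

definition Gamma :: "nat \<Rightarrow> nat \<Rightarrow> (nat \<Rightarrow> real) set" where
  "Gamma n k = {x. \<forall>j. 1 \<le> j \<and> j \<le> k \<longrightarrow> esym n j x > 0}"

definition lam :: "real \<Rightarrow> real \<Rightarrow> nat \<Rightarrow> (nat \<Rightarrow> real) \<Rightarrow> (nat \<Rightarrow> real)" where
  "lam \<theta> \<mu> n \<kappa> = (\<lambda>i. \<theta> * (\<Sum>j<n. \<kappa> j) - \<mu> * \<kappa> i)"

definition Fq :: "nat \<Rightarrow> nat \<Rightarrow> nat \<Rightarrow> real \<Rightarrow> real \<Rightarrow> (nat \<Rightarrow> real) \<Rightarrow> real" where
  "Fq n k l \<theta> \<mu> \<kappa> = esym n k (lam \<theta> \<mu> n \<kappa>) / esym n l (lam \<theta> \<mu> n \<kappa>)"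

definition Fii :: "nat \<Rightarrow> nat \<Rightarrow> nat \<Rightarrow> real \<Rightarrow> real \<Rightarrow> (nat \<Rightarrow> real) \<Rightarrow> nat \<Rightarrow> real" where
  "Fii n k l \<theta> \<mu> \<kappa> i = deriv (\<lambda>t. Fq n k l \<theta> \<mu> (\<kappa>(i := t))) (\<kappa> i)"

end

theory Submission
  imports Defs "HOL-Computational_Algebra.Polynomial"
begin

definition es :: "nat set \<Rightarrow> nat \<Rightarrow> (nat \<Rightarrow> real) \<Rightarrow> real" where
  "es A j x = (\<Sum>S\<in>{S. S \<subseteq> A \<and> card S = j}. \<Prod>i\<in>S. x i)"

lemma esym_es: "esym n j x = es {..<n} j x"
  by (simp add: esym_def es_def)

lemma es_0 [simp]: "finite A \<Longrightarrow> es A 0 x = 1"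
proof -
  assume "finite A"
  then have "{S. S \<subseteq> A \<and> card S = 0} = {{}}"
    using finite_subset by fastforce
  then show ?thesis by (simp add: es_def)
qed

lemma es_big: "finite A \<Longrightarrow> card A < j \<Longrightarrow> es A j x = 0"
proof -
  assume a: "finite A" "card A < j"
  then have "{S. S \<subseteq> A \<and> card S = j} = {}"
    using card_mono by (metis (mono_tags, lifting) Collect_empty_eq leD)
  then show ?thesis unfolding es_def by (metis sum.empty)
qed

lemma es_insert:
  assumes "finite A" "a \<notin> A"
  shows "es (insert a A) (Suc j) x = es A (Suc j) x + x a * es A j x"
proof -
  let ?L = "{S. S \<subseteq> A \<and> card S = Suc j}"
  let ?R = "{S. S \<subseteq> A \<and> card S = j}"
  have eq: "{S. S \<subseteq> insert a A \<and> card S = Suc j} = ?L \<union> insert a ` ?R"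
  proof (intro equalityI subsetI)
    fix S assume S: "S \<in> {S. S \<subseteq> insert a A \<and> card S = Suc j}"
    then have fS: "finite S" using assms(1) finite_subset by auto
    show "S \<in> ?L \<union> insert a ` ?R"
    proof (cases "a \<in> S")
      case True
      then have "S = insert a (S - {a})" by auto
      moreover have "S - {a} \<in> ?R" using S True fS by auto
      ultimately show ?thesis by blast
    next
      case False
      then show ?thesis using S by auto
    qed
  next
    fix S assume "S \<in> ?L \<union> insert a ` ?R"
    then show "S \<in> {S. S \<subseteq> insert a A \<and> card S = Suc j}"
    proof
      assume "S \<in> ?L" then show ?thesis by auto
    next
      assume "S \<in> insert a ` ?R"
      then obtain T where T: "T \<subseteq> A" "card T = j" "S = insert a T" by auto
      have "finite T" using T(1) assms(1) finite_subset by auto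
      moreover have "a \<notin> T" using T(1) assms(2) by auto
      ultimately show ?thesis using T by auto
    qed
  qed
  have fin: "finite ?L" "finite ?R" using assms(1) by auto
  have disj: "?L \<inter> insert a ` ?R = {}" using assms(2) by auto
  have inj: "inj_on (insert a) ?R"
    unfolding inj_on_def using assms(2) by (metis (mono_tags, lifting) insert_ident mem_Collect_eq subsetD)
  have "es (insert a A) (Suc j) x = (\<Sum>S\<in>?L. \<Prod>i\<in>S. x i) + (\<Sum>S\<in>insert a ` ?R. \<Prod>i\<in>S. x i)"
    unfolding es_def eq using fin disj by (simp add: sum.union_disjoint)
  also have "(\<Sum>S\<in>insert a ` ?R. \<Prod>i\<in>S. x i) = (\<Sum>T\<in>?R. \<Prod>i\<in>insert a T. x i)"
    using inj by (simp add: sum.reindex)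
  also have "\<dots> = (\<Sum>T\<in>?R. x a * (\<Prod>i\<in>T. x i))"
  proof (rule sum.cong)
    fix T assume "T \<in> ?R"
    then have "finite T" "a \<notin> T" using assms finite_subset by auto
    then show "(\<Prod>i\<in>insert a T. x i) = x a * (\<Prod>i\<in>T. x i)" by simp
  qed simp
  finally show ?thesis by (simp add: es_def sum_distrib_left)
qed

lemma es_nonneg: "finite A \<Longrightarrow> (\<forall>i\<in>A. x i \<ge> 0) \<Longrightarrow> es A j x \<ge> 0"
  unfolding es_def by (intro sum_nonneg prod_nonneg) auto

lemma es_pos: "finite A \<Longrightarrow> (\<forall>i\<in>A. x i > 0) \<Longrightarrow> j \<le> card A \<Longrightarrow> es A j x > 0"
proof -
  assume a: "finite A" "\<forall>i\<in>A. x i > 0" "j \<le> card A"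
  obtain T where T: "T \<subseteq> A" "card T = j" using obtain_subset_with_card_n[OF a(3)] by blast
  have "{S. S \<subseteq> A \<and> card S = j} \<noteq> {}" using T by blast
  moreover have "finite {S. S \<subseteq> A \<and> card S = j}" using a(1) by auto
  ultimately show ?thesis unfolding es_def
    by (intro sum_pos prod_pos) (use a(2) in auto)
qed

definition pl :: "nat set \<Rightarrow> (nat \<Rightarrow> real) \<Rightarrow> real poly" where
  "pl A x = (\<Prod>i\<in>A. [:x i, 1:])"

lemma coeff_lin_mult: fixes c :: real shows "coeff ([:c, 1:] * q) d = c * coeff q d + (case d of 0 \<Rightarrow> 0 | Suc d' \<Rightarrow> coeff q d')"
  by (cases d) (simp_all add: mult_pCons_left coeff_pCons)

lemma coeff_pl: "finite A \<Longrightarrow> coeff (pl A x) d = (if d \<le> card A then es A (card A - d) x else 0)"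
proof (induction A arbitrary: d rule: finite_induct)
  case empty
  then show ?case by (simp add: pl_def coeff_1)
next
  case (insert a F)
  have pl: "pl (insert a F) x = [:x a, 1:] * pl F x"
    using insert by (simp add: pl_def)
  have c: "card (insert a F) = Suc (card F)" using insert by simp
  show ?case
  proof (cases d)
    case 0
    then show ?thesis using insert
      by (simp add: pl coeff_lin_mult c es_insert es_big)
  next
    case (Suc d')
    show ?thesis
    proof (cases "d' < card F")
      case True
      then have e: "card F - d' = Suc (card F - Suc d')" by simp
      show ?thesis using insert True Suc
        by (simp add: pl coeff_lin_mult c e es_insert)
    next
      case False
      then show ?thesis using insert Suc
        by (auto simp add: pl coeff_lin_mult c es_insert)
    qed
  qed
qed

lemma degree_pl: "finite A \<Longrightarrow> degree (pl A x) = card A"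
proof -
  assume f: "finite A"
  have "degree (pl A x) \<le> card A"
    by (rule degree_le) (simp add: coeff_pl[OF f])
  moreover have "card A \<le> degree (pl A x)"
    by (rule le_degree) (simp add: coeff_pl[OF f] f)
  ultimately show ?thesis by simp
qed

lemma pl_nz: "finite A \<Longrightarrow> pl A x \<noteq> 0"
  by (metis coeff_0 coeff_pl es_0 order_refl zero_neq_one diff_self_eq_0)

lemma proots_pl: "finite A \<Longrightarrow> size (proots (pl A x)) = card A"
proof -
  assume f: "finite A"
  have "proots (pl A x) = (\<Sum>i\<in>A. proots [:x i, 1:])"
    unfolding pl_def by (rule proots_prod) auto
  also have "\<dots> = (\<Sum>i\<in>A. {#- x i#})" by simp
  finally show ?thesis using f by simp
qed

definition rr :: "real poly \<Rightarrow> bool" where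
  "rr p \<longleftrightarrow> p \<noteq> 0 \<and> size (proots p) = degree p"

lemma rr_pl: "finite A \<Longrightarrow> rr (pl A x)"
  by (simp add: rr_def pl_nz proots_pl degree_pl)

lemma rr_decomp: fixes p :: "real poly" shows
  "p \<noteq> 0 \<Longrightarrow> size (proots p) = degree p \<Longrightarrow> p = smult (lead_coeff p) (\<Prod>x\<in>#proots p. [:-x, 1:])"
proof (induction "degree p" arbitrary: p)
  case 0
  then have "proots p = {#}" by simp
  moreover have "p = [:lead_coeff p:]" using 0 by (metis degree_0_id)
  ultimately show ?case by simp
next
  case (Suc d)
  then have "proots p \<noteq> {#}" by auto
  then obtain x where "x \<in># proots p" by blast
  then have "poly p x = 0" using Suc.prems by simp
  then obtain q where q: "p = [:-x, 1:] * q" using poly_eq_0_iff_dvd by (metis dvdE)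
  have qnz: "q \<noteq> 0" using q Suc.prems by auto
  have l: "[:-x, 1:] \<noteq> (0::real poly)" by simp
  have lin: "proots [:-x, 1:] = {#x#}" using proots_linear_factor[of "-x"] by simp
  have "proots ([:-x, 1:] * q) = proots [:-x, 1:] + proots q" by (rule proots_mult[OF l qnz])
  then have pr: "proots p = {#x#} + proots q" using q lin by simp
  have "degree ([:-x, 1:] * q) = degree [:-x, 1:] + degree q" by (rule degree_mult_eq[OF l qnz])
  then have dq: "degree q = d" using q Suc.hyps by simp
  have sq: "size (proots q) = degree q" using pr Suc.prems dq Suc.hyps by simp
  have IH: "q = smult (lead_coeff q) (\<Prod>x\<in>#proots q. [:-x, 1:])"
    using Suc.hyps dq qnz sq by blast
  have "lead_coeff ([:-x, 1:] * q) = lead_coeff [:-x, 1:] * lead_coeff q" by (rule lead_coeff_mult)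
  then have lc: "lead_coeff p = lead_coeff q" using q by simp
  have "p = [:-x, 1:] * smult (lead_coeff q) (\<Prod>x\<in>#proots q. [:-x, 1:])"
    using q IH by simp
  also have "\<dots> = smult (lead_coeff p) (\<Prod>x\<in>#proots p. [:-x, 1:])"
    by (simp add: pr lc mult_smult_right)
  finally show ?case .
qed

lemma rolle_count:
  fixes f f' :: "real \<Rightarrow> real"
  assumes der: "\<And>x. DERIV f x :> f' x"
  shows "finite R \<Longrightarrow> R \<noteq> {} \<Longrightarrow> (\<forall>r\<in>R. f r = 0) \<Longrightarrow>
    \<exists>Z. finite Z \<and> card Z + 1 = card R \<and> Z \<inter> R = {} \<and> (\<forall>z\<in>Z. f' z = 0) \<and> (\<forall>z\<in>Z. z < Max R)"
proof (induction "card R" arbitrary: R rule: less_induct)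
  case less
  show ?case
  proof (cases "card R = 1")
    case True
    then show ?thesis by (intro exI[of _ "{}"]) auto
  next
    case False
    define a where "a = Max R"
    define R' where "R' = R - {a}"
    have aR: "a \<in> R" using less.prems a_def by auto
    have cR: "card R' < card R" using aR less.prems unfolding R'_def
      by (meson card_Diff1_less)
    have cR1: "card R = card R' + 1" using aR less.prems unfolding R'_def
      by (simp add: card_Diff_singleton_if) (metis One_nat_def Suc_pred card_gt_0_iff)
    have R'ne: "R' \<noteq> {}" using False cR1 less.prems by (metis add_0 card.empty)
    have fR': "finite R'" using less.prems R'_def by auto
    obtain Z' where Z': "finite Z'" "card Z' + 1 = card R'" "Z' \<inter> R' = {}"
      "\<forall>z\<in>Z'. f' z = 0" "\<forall>z\<in>Z'. z < Max R'"
      using less.hyps[OF cR fR' R'ne] less.prems R'_def by auto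
    define b where "b = Max R'"
    have bR': "b \<in> R'" using fR' R'ne b_def by auto
    have ba: "b < a" using bR' aR less.prems unfolding R'_def a_def
      by (metis DiffD1 DiffD2 Max_ge insertI1 order_le_neq_trans)
    have "\<exists>z. b < z \<and> z < a \<and> (\<lambda>v. f' z * v) = (\<lambda>v. 0)"
    proof (rule Rolle_deriv[OF ba])
      show "f b = f a" using bR' aR less.prems R'_def by auto
      show "continuous_on {b..a} f"
        using der by (intro continuous_at_imp_continuous_on ballI) (meson DERIV_continuous)
      show "\<And>x. b < x \<Longrightarrow> x < a \<Longrightarrow> (f has_derivative (\<lambda>v. f' x * v)) (at x)"
      proof -
        fix x
        have "(f has_derivative (*) (f' x)) (at x)" using der[of x] by (simp add: has_field_derivative_def)
        then show "(f has_derivative (\<lambda>v. f' x * v)) (at x)" by simp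
      qed
    qed
    then obtain z where z0: "b < z" "z < a" "(\<lambda>v. f' z * v) = (\<lambda>v. 0)" by blast
    have "f' z = 0" using fun_cong[OF z0(3), of 1] by simp
    note z = z0(1,2) this
    have zZ': "z \<notin> Z'" using Z'(5) z(1) b_def by force
    have zR: "z \<notin> R"
    proof
      assume "z \<in> R"
      moreover have "z \<noteq> a" using z by simp
      ultimately have "z \<in> R'" using R'_def by auto
      then have "z \<le> b" using fR' b_def by simp
      then show False using z by simp
    qed
    have aZ': "a \<notin> Z'" using Z'(5) ba b_def by fastforce
    show ?thesis
    proof (intro exI[of _ "insert z Z'"] conjI)
      show "finite (insert z Z')" using Z' by simp
      show "card (insert z Z') + 1 = card R" using Z' zZ' cR1 by simp
      show "insert z Z' \<inter> R = {}" using Z'(3) zR aZ' R'_def by auto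
      show "\<forall>za\<in>insert z Z'. f' za = 0" using Z'(4) z by auto
      show "\<forall>za\<in>insert z Z'. za < Max R" using Z'(5) z ba a_def b_def by auto
    qed
  qed
qed

lemma sum_count_le_size: "finite X \<Longrightarrow> sum (count M) X \<le> size M"
proof -
  assume f: "finite X"
  have "sum (count M) X = sum (count M) (X \<inter> set_mset M)"
    by (rule sum.mono_neutral_right) (use f in auto)
  also have "\<dots> \<le> sum (count M) (set_mset M)" by (rule sum_mono2) auto
  also have "\<dots> = size M" by (simp add: size_multiset_overloaded_eq)
  finally show ?thesis .
qed

lemma rr_pderiv:
  fixes p :: "real poly"
  assumes rp: "rr p" and d2: "degree p \<ge> 2"
  shows "rr (pderiv p)"
proof -
  have pnz: "p \<noteq> 0" and sz: "size (proots p) = degree p" using rp by (auto simp: rr_def)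
  define R where "R = {x. poly p x = 0}"
  have fR: "finite R" using poly_roots_finite[OF pnz] R_def by simp
  have "proots p \<noteq> {#}" using sz d2 by auto
  then obtain x0 where "x0 \<in># proots p" by blast
  then have R0: "R \<noteq> {}" using pnz R_def by auto
  have R1: "\<forall>r\<in>R. poly p r = 0" using R_def by simp
  have "\<exists>Z. finite Z \<and> card Z + 1 = card R \<and> Z \<inter> R = {} \<and> (\<forall>z\<in>Z. poly (pderiv p) z = 0) \<and> (\<forall>z\<in>Z. z < Max R)"
    by (rule rolle_count[OF poly_DERIV fR R0 R1])
  then obtain Z where Z: "finite Z" "card Z + 1 = card R" "Z \<inter> R = {}" "\<forall>z\<in>Z. poly (pderiv p) z = 0"
    by blast
  have dp: "degree (pderiv p) = degree p - 1" by (rule degree_pderiv)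
  have pdnz: "pderiv p \<noteq> 0" using dp d2 by (metis pderiv_eq_0_iff not_numeral_le_zero)
  have A: "(\<Sum>x\<in>R. order x p) = degree p"
    using sz pnz by (simp add: size_multiset_overloaded_eq R_def)
  have B: "\<And>x. x \<in> R \<Longrightarrow> order x p = Suc (order x (pderiv p))"
    using order_pderiv pnz R_def by auto
  have A2: "(\<Sum>x\<in>R. order x (pderiv p)) + card R = degree p"
  proof -
    have "(\<Sum>x\<in>R. order x p) = (\<Sum>x\<in>R. order x (pderiv p) + 1)"
      using B by (intro sum.cong) auto
    then show ?thesis using A sum_Suc[of "\<lambda>x. order x (pderiv p)" R] by simp
  qed
  have C: "card Z \<le> (\<Sum>z\<in>Z. order z (pderiv p))"
  proof -
    have "card Z = (\<Sum>z\<in>Z. 1::nat)" by simp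
    also have "\<dots> \<le> (\<Sum>z\<in>Z. order z (pderiv p))"
      using Z(4) pdnz by (intro sum_mono) (metis One_nat_def Suc_leI neq0_conv order_root)
    finally show ?thesis .
  qed
  have D: "(\<Sum>x\<in>R \<union> Z. order x (pderiv p)) \<le> size (proots (pderiv p))"
  proof -
    have "(\<Sum>x\<in>R \<union> Z. order x (pderiv p)) = (\<Sum>x\<in>R \<union> Z. count (proots (pderiv p)) x)"
      using pdnz by simp
    also have "\<dots> \<le> size (proots (pderiv p))" by (rule sum_count_le_size) (use fR Z in auto)
    finally show ?thesis .
  qed
  have E: "(\<Sum>x\<in>R \<union> Z. order x (pderiv p)) = (\<Sum>x\<in>R. order x (pderiv p)) + (\<Sum>x\<in>Z. order x (pderiv p))"
    using fR Z by (intro sum.union_disjoint) auto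
  have "degree (pderiv p) \<le> size (proots (pderiv p))"
    using A2 C D E Z(2) dp by linarith
  moreover have "size (proots (pderiv p)) \<le> degree (pderiv p)" by (rule size_proots_le)
  ultimately show ?thesis using pdnz by (simp add: rr_def)
qed

lemma reflect_prod_mset: "reflect_poly (\<Prod>x\<in>#M. f x) = (\<Prod>x\<in>#M. reflect_poly (f x))"
  for f :: "'a \<Rightarrow> real poly"
  by (induction M) (simp_all add: reflect_poly_mult)

lemma prod_mset_smult: "(\<Prod>x\<in>#M. smult (g x) (h x :: real poly)) = smult (\<Prod>x\<in>#M. g x) (\<Prod>x\<in>#M. h x)"
  by (induction M) (simp_all add: mult_smult_left mult_smult_right mult_ac)

lemma prod_lin_nz: "(\<Prod>x\<in>#M. [:- g x, 1 :: real:]) \<noteq> 0"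
  by (subst prod_mset_zero_iff) auto

lemma proots_prod_lin: "proots (\<Prod>x\<in>#M. [:- g x, 1 :: real:]) = image_mset g M"
proof (induction M)
  case empty
  then show ?case by simp
next
  case (add x M)
  have l: "[:- g x, 1 :: real:] \<noteq> 0" by simp
  have lin: "proots [:-g x, 1 :: real:] = {#g x#}" using proots_linear_factor[of "-g x"] by simp
  have "(\<Prod>x\<in>#add_mset x M. [:- g x, 1 :: real:]) = [:- g x, 1:] * (\<Prod>x\<in>#M. [:- g x, 1:])" by simp
  then show ?case using proots_mult[OF l prod_lin_nz[of g M]] lin add.IH by simp
qed

lemma reflect_lin: "x \<noteq> 0 \<Longrightarrow> reflect_poly [:- x, 1 :: real:] = smult (-x) [:- (1/x), 1:]"
  by (simp add: reflect_poly_pCons' monom_altdef)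

lemma rr_reflect:
  fixes p :: "real poly"
  assumes rp: "rr p" and c0: "coeff p 0 \<noteq> 0"
  shows "rr (reflect_poly p)"
proof -
  have pnz: "p \<noteq> 0" and sz: "size (proots p) = degree p" using rp by (auto simp: rr_def)
  define M where "M = proots p"
  have dec: "p = smult (lead_coeff p) (\<Prod>x\<in>#M. [:-x, 1:])" using rr_decomp[OF pnz sz] M_def by simp
  have M0: "\<And>x. x \<in># M \<Longrightarrow> x \<noteq> 0" using c0 pnz M_def by (auto simp: poly_0_coeff_0)
  have "reflect_poly p = smult (lead_coeff p) (\<Prod>x\<in>#M. reflect_poly [:-x, 1:])"
    by (subst dec) (simp add: reflect_poly_smult reflect_prod_mset)
  also have "(\<Prod>x\<in>#M. reflect_poly [:-x, 1:]) = (\<Prod>x\<in>#M. smult (-x) [:- (1/x), 1:])"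
    by (intro arg_cong[where f = prod_mset] image_mset_cong) (use M0 reflect_lin in auto)
  also have "\<dots> = smult (\<Prod>x\<in>#M. -x) (\<Prod>x\<in>#M. [:- (1/x), 1:])" by (rule prod_mset_smult)
  finally have r: "reflect_poly p = smult (lead_coeff p * (\<Prod>x\<in>#M. -x)) (\<Prod>x\<in>#M. [:- (1/x), 1:])"
    by simp
  have cnz: "lead_coeff p * (\<Prod>x\<in>#M. -x) \<noteq> 0" using pnz M0 by (auto simp: prod_mset_zero_iff)
  have "size (proots (reflect_poly p)) = size M"
    unfolding r using cnz by (simp add: proots_prod_lin)
  then show ?thesis using sz M_def c0 pnz by (simp add: rr_def)
qed

definition ne :: "real poly \<Rightarrow> nat \<Rightarrow> real" where
  "ne p j = coeff p (degree p - j) / real (degree p choose j)"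

lemma newton_base:
  fixes p :: "real poly"
  assumes "rr p" "degree p = 2"
  shows "ne p 0 * ne p 2 \<le> (ne p 1)^2"
proof -
  have "proots p \<noteq> {#}" using assms by (auto simp: rr_def)
  then obtain x where "x \<in># proots p" by blast
  then have px: "poly p x = 0" using assms by (auto simp: rr_def)
  define c0 c1 c2 where "c0 = coeff p 0" "c1 = coeff p 1" "c2 = coeff p 2"
  have "poly p x = (\<Sum>i\<le>2. coeff p i * x ^ i)" using assms(2) by (simp add: poly_altdef)
  also have "\<dots> = c0 + c1 * x + c2 * x^2" by (simp add: c0_c1_c2_def numeral_2_eq_2)
  finally have e: "c0 = - (c1 * x + c2 * x^2)" using px by simp
  have "c1^2 - 4 * (c0 * c2) = (2 * c2 * x + c1)^2"
    by (subst e) (simp add: algebra_simps power2_eq_square)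
  moreover have "(2 * c2 * x + c1)^2 \<ge> 0" by simp
  ultimately have "4 * (c0 * c2) \<le> c1^2" by linarith
  then show ?thesis using assms(2) unfolding ne_def c0_c1_c2_def
    by (simp add: power_divide mult.commute)
qed

lemma ne_pderiv:
  fixes p :: "real poly"
  assumes "degree p = m" "m \<ge> 1" "j \<le> m - 1"
  shows "ne (pderiv p) j = real m * ne p j"
proof -
  have dp: "degree (pderiv p) = m - 1" using assms by (simp add: degree_pderiv)
  define r where "r = real (m - j)"
  have c: "coeff (pderiv p) (m - 1 - j) = r * coeff p (m - j)"
    using assms unfolding r_def by (simp add: coeff_pderiv Suc_diff_Suc)
  have b: "r * real (m choose j) = real m * real ((m - 1) choose j)"
    using binomial_absorb_comp[of m j] unfolding r_def by (metis of_nat_mult)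
  have b0: "real ((m - 1) choose j) \<noteq> 0" using assms by simp
  have b1: "real (m choose j) \<noteq> 0" using assms by simp
  have "r * coeff p (m - j) / real ((m - 1) choose j)
      = (r * real (m choose j)) * coeff p (m - j) / (real ((m - 1) choose j) * real (m choose j))"
    using b1 by simp
  also have "\<dots> = (real m * real ((m - 1) choose j)) * coeff p (m - j) / (real ((m - 1) choose j) * real (m choose j))"
    by (simp only: b)
  also have "\<dots> = real m * coeff p (m - j) / real (m choose j)"
    using b0 by simp
  finally have "r * coeff p (m - j) / real ((m - 1) choose j) = real m * coeff p (m - j) / real (m choose j)" .
  then show ?thesis unfolding ne_def dp c assms(1) by simp
qed

lemma ne_reflect:
  fixes p :: "real poly"
  assumes "coeff p 0 \<noteq> 0" "t \<le> degree p"
  shows "ne (reflect_poly p) t = ne p (degree p - t)"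
  using assms unfolding ne_def
  by (simp add: coeff_reflect_poly binomial_symmetric[of t "degree p"])

theorem newton_poly:
  "rr p \<Longrightarrow> 1 \<le> j \<Longrightarrow> j + 1 \<le> degree p \<Longrightarrow> ne p (j - 1) * ne p (j + 1) \<le> (ne p j)^2"
proof (induction "degree p" arbitrary: p j rule: less_induct)
  case less
  define m where "m = degree p"
  show ?case
  proof (cases "m = 2")
    case True
    then have "j = 1" using less.prems m_def by simp
    then show ?thesis using newton_base[OF less.prems(1)] True m_def by (simp add: numeral_2_eq_2)
  next
    case False
    then have m3: "m \<ge> 3" using less.prems m_def by simp
    have A: "ne q (i - 1) * ne q (i + 1) \<le> (ne q i)^2"
      if q: "rr q" "degree q = m" and i: "1 \<le> i" "i + 2 \<le> m" for q i
    proof -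
      have rq': "rr (pderiv q)" using rr_pderiv[OF q(1)] q(2) m3 by simp
      have dq': "degree (pderiv q) = m - 1" using q(2) by (simp add: degree_pderiv)
      have lt: "degree (pderiv q) < degree p" using dq' m_def m3 by simp
      have IH: "ne (pderiv q) (i - 1) * ne (pderiv q) (i + 1) \<le> (ne (pderiv q) i)^2"
        using less.hyps[OF lt rq' i(1)] dq' i by simp
      have e1: "ne (pderiv q) (i - 1) = real m * ne q (i - 1)"
        by (rule ne_pderiv) (use q i m3 in auto)
      have e2: "ne (pderiv q) (i + 1) = real m * ne q (i + 1)"
        by (rule ne_pderiv) (use q i m3 in auto)
      have e3: "ne (pderiv q) i = real m * ne q i"
        by (rule ne_pderiv) (use q i m3 in auto)
      have "real m ^ 2 * (ne q (i - 1) * ne q (i + 1)) \<le> real m ^ 2 * (ne q i)^2"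
        using IH unfolding e1 e2 e3 by (simp add: algebra_simps power2_eq_square)
      moreover have "real m ^ 2 > 0" using m3 by simp
      ultimately show ?thesis by simp
    qed
    show ?thesis
    proof (cases "j + 2 \<le> m")
      case True
      then show ?thesis using A less.prems m_def by blast
    next
      case False
      then have jm: "j = m - 1" using less.prems m_def by simp
      show ?thesis
      proof (cases "coeff p 0 = 0")
        case True
        then have "ne p (j + 1) = 0" using jm m3 m_def by (simp add: ne_def)
        then show ?thesis by simp
      next
        case c0: False
        define r where "r = reflect_poly p"
        have rr: "rr r" using rr_reflect[OF less.prems(1) c0] r_def by simp
        have dr: "degree r = m" using c0 r_def m_def by simp
        have "ne r (1 - 1) * ne r (1 + 1) \<le> (ne r 1)^2"
          by (rule A[OF rr dr]) (use m3 in auto)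
        moreover have "ne r 0 = ne p (j + 1)" using ne_reflect[OF c0, of 0] r_def m_def jm m3 by simp
        moreover have "ne r 2 = ne p (j - 1)" using ne_reflect[OF c0, of 2] r_def m_def jm m3
          by (simp add: numeral_2_eq_2)
        moreover have "ne r 1 = ne p j" using ne_reflect[OF c0, of 1] r_def m_def jm m3 by simp
        ultimately show ?thesis by (simp add: mult.commute numeral_2_eq_2)
      qed
    qed
  qed
qed

lemma ne_pl: "finite A \<Longrightarrow> t \<le> card A \<Longrightarrow> ne (pl A x) t = es A t x / real (card A choose t)"
  by (simp add: ne_def degree_pl coeff_pl)

lemma bin_id: "(n choose Suc k) * Suc k = (n choose k) * (n - k)"
  using binomial_absorption[of k n] binomial_absorb_comp[of n k] by (simp add: mult.commute)

theorem newton_es: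
  assumes fA: "finite A" and j: "1 \<le> j"
  shows "real (j + 1) * real (card A - j + 1) * (es A (j - 1) x * es A (j + 1) x)
          \<le> real j * real (card A - j) * (es A j x)^2"
proof (cases "j + 1 \<le> card A")
  case False
  then have "es A (j + 1) x = 0" using es_big[OF fA] by simp
  then show ?thesis by simp
next
  case True
  define m where "m = card A"
  define C0 C1 C2 where "C0 = real (m choose (j - 1))" "C1 = real (m choose j)" "C2 = real (m choose (j + 1))"
  have pos: "C0 > 0" "C1 > 0" "C2 > 0" using True m_def C0_C1_C2_def by auto
  have N: "ne (pl A x) (j - 1) * ne (pl A x) (j + 1) \<le> (ne (pl A x) j)^2"
    using newton_poly[OF rr_pl[OF fA] j] True degree_pl[OF fA] by simp
  have N2: "es A (j - 1) x / C0 * (es A (j + 1) x / C2) \<le> (es A j x / C1)^2"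
    using N True fA unfolding C0_C1_C2_def m_def by (simp add: ne_pl)
  have i1: "C0 * real (m - j + 1) = C1 * real j"
  proof -
    have "(m choose Suc (j - 1)) * Suc (j - 1) = (m choose (j - 1)) * (m - (j - 1))" by (rule bin_id)
    moreover have "Suc (j - 1) = j" "m - (j - 1) = m - j + 1" using j True m_def by auto
    moreover have "j \<le> m" using True m_def by simp
    ultimately have "(m choose j) * j = (m choose (j - 1)) * (m - j + 1)" by (simp add: Suc_diff_le)
    then show ?thesis unfolding C0_C1_C2_def by (metis of_nat_mult mult.commute)
  qed
  have i2: "C2 * real (j + 1) = C1 * real (m - j)"
    using bin_id[of m j] unfolding C0_C1_C2_def by (metis Suc_eq_plus1 of_nat_mult)
  let ?a = "es A (j - 1) x" and ?b = "es A (j + 1) x" and ?c = "es A j x"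
  have "?a * ?b * C1^2 \<le> ?c^2 * (C0 * C2)"
    using N2 pos by (simp add: field_simps power2_eq_square)
  then have "?a * ?b * C1^2 * (real (m - j + 1) * real (j + 1)) \<le> ?c^2 * (C0 * C2) * (real (m - j + 1) * real (j + 1))"
    by (rule mult_right_mono) simp
  also have "?c^2 * (C0 * C2) * (real (m - j + 1) * real (j + 1)) = ?c^2 * C1^2 * (real j * real (m - j))"
  proof -
    have "(C0 * C2) * (real (m - j + 1) * real (j + 1)) = (C0 * real (m - j + 1)) * (C2 * real (j + 1))"
      by (simp only: mult_ac)
    also have "\<dots> = (C1 * real j) * (C1 * real (m - j))" by (simp only: i1 i2)
    also have "\<dots> = C1^2 * (real j * real (m - j))" by (simp add: power2_eq_square mult_ac)
    finally have k: "(C0 * C2) * (real (m - j + 1) * real (j + 1)) = C1^2 * (real j * real (m - j))" .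
    show ?thesis using k by (metis mult.assoc)
  qed
  finally have "(?a * ?b * (real (m - j + 1) * real (j + 1))) * C1^2 \<le> (?c^2 * (real j * real (m - j))) * C1^2"
    by (simp add: algebra_simps)
  then have "?a * ?b * (real (m - j + 1) * real (j + 1)) \<le> ?c^2 * (real j * real (m - j))"
    using pos by simp
  then show ?thesis unfolding m_def[symmetric] by (simp add: ac_simps)
qed

lemma es_del:
  assumes "finite A" "i \<in> A"
  shows "es A (Suc j) x = es (A - {i}) (Suc j) x + x i * es (A - {i}) j x"
proof -
  have "A = insert i (A - {i})" using assms by auto
  then have "es A (Suc j) x = es (insert i (A - {i})) (Suc j) x" by simp
  also have "\<dots> = es (A - {i}) (Suc j) x + x i * es (A - {i}) j x"
    by (rule es_insert) (use assms in auto)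
  finally show ?thesis .
qed

lemma newton_unnorm:
  assumes fA: "finite A" and j: "1 \<le> j"
  shows "es A (j - 1) x * es A (j + 1) x \<le> (es A j x)^2"
proof (cases "es A (j - 1) x * es A (j + 1) x \<le> 0")
  case True
  then show ?thesis by (meson order_trans zero_le_power2)
next
  case False
  define P where "P = es A (j - 1) x * es A (j + 1) x"
  define a where "a = real (j + 1) * real (card A - j + 1)"
  define b where "b = real j * real (card A - j)"
  have N: "a * P \<le> b * (es A j x)^2" using newton_es[OF fA j] unfolding a_def b_def P_def by simp
  have ab: "b \<le> a" unfolding a_def b_def by (intro mult_mono) auto
  have "b * (es A j x)^2 \<le> a * (es A j x)^2" using ab by (intro mult_right_mono) auto
  then have "a * P \<le> a * (es A j x)^2" using N by linarith
  moreover have "a > 0" unfolding a_def by simp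
  ultimately show ?thesis unfolding P_def by simp
qed

definition Gam :: "nat set \<Rightarrow> nat \<Rightarrow> (nat \<Rightarrow> real) \<Rightarrow> bool" where
  "Gam A k x \<longleftrightarrow> (\<forall>j. 1 \<le> j \<and> j \<le> k \<longrightarrow> es A j x > 0)"

lemma Gam_pos: "finite A \<Longrightarrow> Gam A k x \<Longrightarrow> j \<le> k \<Longrightarrow> es A j x > 0"
  unfolding Gam_def by (cases "j = 0") auto

lemma Gam_mono: "Gam A k x \<Longrightarrow> k' \<le> k \<Longrightarrow> Gam A k' x"
  unfolding Gam_def by auto

lemma Gam_del:
  assumes fA: "finite A" and iA: "i \<in> A" and G: "Gam A k x"
  shows "Gam (A - {i}) (k - 1) x"
proof -
  let ?A = "A - {i}"
  have fA': "finite ?A" using fA by simp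
  have "\<forall>j. j < k \<longrightarrow> es ?A j x > 0"
  proof
    fix j show "j < k \<longrightarrow> es ?A j x > 0"
    proof (induction j)
      case 0
      then show ?case using fA' by simp
    next
      case (Suc j)
      show ?case
      proof
        assume jk: "Suc j < k"
        define s where "s = es ?A (Suc j) x"
        define B where "B = es ?A j x"
        define C where "C = es ?A (Suc (Suc j)) x"
        have B0: "B > 0" using Suc.IH jk B_def by simp
        have e1: "es A (Suc j) x = s + x i * B" unfolding s_def B_def by (rule es_del[OF fA iA])
        have e2: "es A (Suc (Suc j)) x = C + x i * s" unfolding s_def C_def by (rule es_del[OF fA iA])
        have p1: "s + x i * B > 0" using e1 G jk unfolding Gam_def by (metis Suc_leI le_add1 less_imp_le plus_1_eq_Suc)
        have p2: "C + x i * s > 0" using e2 G jk unfolding Gam_def by (metis Suc_leI le_add1 plus_1_eq_Suc)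
        have N: "B * C \<le> s^2"
          using newton_unnorm[OF fA', of "Suc j" x] unfolding s_def B_def C_def by simp
        show "s > 0"
        proof (rule ccontr)
          assume "\<not> s > 0"
          then have s0: "s \<le> 0" by simp
          have xB: "x i * B > - s" using p1 by simp
          have "- s \<ge> 0" using s0 by simp
          have Cg: "C > - (x i * s)" using p2 by simp
          have h1: "B * C > B * (- (x i * s))" using mult_strict_left_mono[OF Cg B0] .
          have h2: "B * (- (x i * s)) = (x i * B) * (- s)" by (simp add: algebra_simps)
          have h3: "(x i * B) * (- s) \<ge> (- s) * (- s)"
            using xB s0 by (intro mult_right_mono) auto
          have h4: "(- s) * (- s) = s^2" by (simp add: power2_eq_square)
          have "B * C > s^2" using h1 h2 h3 h4 by linarith
          then show False using N by simp
        qed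
      qed
    qed
  qed
  then show ?thesis unfolding Gam_def by auto
qed

lemma es_I1:
  "finite A \<Longrightarrow> (\<Sum>p\<in>A. es (A - {p}) j x) = (real (card A) - real j) * es A j x"
proof (induction A arbitrary: j rule: finite_induct)
  case empty
  then show ?case by (cases j) (simp_all add: es_big)
next
  case (insert a F)
  have eqs: "\<And>p. p \<in> F \<Longrightarrow> insert a F - {p} = insert a (F - {p})" using insert.hyps by auto
  have sp: "(\<Sum>p\<in>insert a F. es (insert a F - {p}) j x) = es F j x + (\<Sum>p\<in>F. es (insert a (F - {p})) j x)"
    using insert.hyps eqs by (simp add: sum.insert)
  show ?case
  proof (cases j)
    case 0
    then show ?thesis using insert.hyps sp by simp
  next
    case (Suc j')
    have "(\<Sum>p\<in>F. es (insert a (F - {p})) (Suc j') x)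
        = (\<Sum>p\<in>F. es (F - {p}) (Suc j') x + x a * es (F - {p}) j' x)"
      using insert.hyps by (intro sum.cong) (auto intro: es_insert)
    also have "\<dots> = (\<Sum>p\<in>F. es (F - {p}) (Suc j') x) + x a * (\<Sum>p\<in>F. es (F - {p}) j' x)"
      by (simp add: sum.distrib sum_distrib_left)
    also have "\<dots> = (real (card F) - real (Suc j')) * es F (Suc j') x + x a * ((real (card F) - real j') * es F j' x)"
      using insert.IH by simp
    finally have h: "(\<Sum>p\<in>F. es (insert a (F - {p})) (Suc j') x) = (real (card F) - real (Suc j')) * es F (Suc j') x + x a * ((real (card F) - real j') * es F j' x)" .
    have e: "es (insert a F) (Suc j') x = es F (Suc j') x + x a * es F j' x"
      by (rule es_insert) (use insert.hyps in auto)
    have "(\<Sum>p\<in>insert a F. es (insert a F - {p}) j x) = es F (Suc j') x + (\<Sum>p\<in>F. es (insert a (F - {p})) (Suc j') x)"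
      using sp unfolding Suc .
    also have "\<dots> = es F (Suc j') x + ((real (card F) - real (Suc j')) * es F (Suc j') x + x a * ((real (card F) - real j') * es F j' x))"
      by (simp only: h)
    also have "\<dots> = (real (card F) - real j') * (es F (Suc j') x + x a * es F j' x)"
      by (simp add: algebra_simps)
    also have "\<dots> = (real (card (insert a F)) - real j) * es (insert a F) j x"
      unfolding e Suc using insert.hyps by simp
    finally show ?thesis .
  qed
qed

lemma es_I2:
  "finite A \<Longrightarrow> (\<Sum>p\<in>A. x p * es (A - {p}) j x) = real (Suc j) * es A (Suc j) x"
proof (induction A arbitrary: j rule: finite_induct)
  case empty
  then show ?case by (simp add: es_def)
next
  case (insert a F)
  have eqs: "\<And>p. p \<in> F \<Longrightarrow> insert a F - {p} = insert a (F - {p})" using insert.hyps by auto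
  have sp: "(\<Sum>p\<in>insert a F. x p * es (insert a F - {p}) j x) = x a * es F j x + (\<Sum>p\<in>F. x p * es (insert a (F - {p})) j x)"
    using insert.hyps eqs by (simp add: sum.insert)
  have e: "\<And>i. es (insert a F) (Suc i) x = es F (Suc i) x + x a * es F i x"
    by (rule es_insert) (use insert.hyps in auto)
  show ?case
  proof (cases j)
    case 0
    have "(\<Sum>p\<in>F. x p * es (insert a (F - {p})) 0 x) = (\<Sum>p\<in>F. x p * es (F - {p}) 0 x)"
      using insert.hyps by (intro sum.cong) auto
    also have "\<dots> = es F 1 x" using insert.IH[of 0] by simp
    finally show ?thesis unfolding 0 sp using e[of 0] insert.hyps by simp
  next
    case (Suc j')
    have "(\<Sum>p\<in>F. x p * es (insert a (F - {p})) (Suc j') x)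
        = (\<Sum>p\<in>F. x p * es (F - {p}) (Suc j') x + x a * (x p * es (F - {p}) j' x))"
      using insert.hyps by (intro sum.cong) (auto simp: es_insert algebra_simps)
    also have "\<dots> = (\<Sum>p\<in>F. x p * es (F - {p}) (Suc j') x) + x a * (\<Sum>p\<in>F. x p * es (F - {p}) j' x)"
      by (simp add: sum.distrib sum_distrib_left)
    also have "\<dots> = real (Suc (Suc j')) * es F (Suc (Suc j')) x + x a * (real (Suc j') * es F (Suc j') x)"
      using insert.IH by simp
    finally have h: "(\<Sum>p\<in>F. x p * es (insert a (F - {p})) (Suc j') x) = real (Suc (Suc j')) * es F (Suc (Suc j')) x + x a * (real (Suc j') * es F (Suc j') x)" .
    have "(\<Sum>p\<in>insert a F. x p * es (insert a F - {p}) j x) = x a * es F (Suc j') x + (\<Sum>p\<in>F. x p * es (insert a (F - {p})) (Suc j') x)"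
      using sp unfolding Suc .
    also have "\<dots> = x a * es F (Suc j') x + (real (Suc (Suc j')) * es F (Suc (Suc j')) x + x a * (real (Suc j') * es F (Suc j') x))"
      by (simp only: h)
    also have "\<dots> = real (Suc (Suc j')) * (es F (Suc (Suc j')) x + x a * es F (Suc j') x)"
      by (simp add: algebra_simps)
    also have "\<dots> = real (Suc j) * es (insert a F) (Suc j) x"
      unfolding e Suc by simp
    finally show ?thesis .
  qed
qed

lemma frac_le_iff: "(b::real) > 0 \<Longrightarrow> d > 0 \<Longrightarrow> (a / b \<le> c / d) = (a * d \<le> c * b)"
  by (simp add: field_simps)

lemma newton_chain:
  assumes fA: "finite A" and G: "Gam A K x" and Km: "K \<le> card A"
    and l: "1 \<le> l" "l \<le> k" "k \<le> K"
  shows "real k * real (card A - l + 1) * (es A k x * es A (l - 1) x)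
         \<le> real l * real (card A - k + 1) * (es A l x * es A (k - 1) x)"
proof -
  define m where "m = card A"
  define t where "t j = real j * es A j x / (real (m - j + 1) * es A (j - 1) x)" for j
  have pos: "\<And>j. j \<le> K \<Longrightarrow> es A j x > 0" using Gam_pos[OF fA G] by simp
  have tstep: "t (Suc j) \<le> t j" if j: "1 \<le> j" "Suc j \<le> K" for j
  proof -
    have N: "real (j + 1) * real (m - j + 1) * (es A (j - 1) x * es A (j + 1) x)
             \<le> real j * real (m - j) * (es A j x)^2"
      using newton_es[OF fA j(1)] m_def by simp
    have p0: "es A (j - 1) x > 0" "es A j x > 0" using pos j by auto
    have mj: "m - j \<ge> 1" using j Km m_def by simp
    have d1: "real (m - Suc j + 1) * es A (Suc j - 1) x > 0" using p0 mj by simp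
    have d2: "real (m - j + 1) * es A (j - 1) x > 0" using p0 by simp
    have "real (Suc j) * es A (Suc j) x * (real (m - j + 1) * es A (j - 1) x)
          \<le> real j * es A j x * (real (m - Suc j + 1) * es A (Suc j - 1) x)"
    proof -
      have "m - Suc j + 1 = m - j" using mj by simp
      then show ?thesis using N by (simp add: algebra_simps power2_eq_square)
    qed
    then show ?thesis unfolding t_def using frac_le_iff[OF d1 d2] by (simp add: ac_simps)
  qed
  have mono: "t k' \<le> t l" if "l \<le> k'" "k' \<le> K" for k'
    using that
  proof (induction k' rule: dec_induct)
    case base
    then show ?case by simp
  next
    case (step k')
    then show ?case using tstep[of k'] l by (meson Suc_leD order_trans le_trans)
  qed
  have tk: "t k \<le> t l" using mono l by simp
  have d1: "real (m - k + 1) * es A (k - 1) x > 0" using pos l by simp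
  have d2: "real (m - l + 1) * es A (l - 1) x > 0" using pos l by simp
  have "real k * es A k x * (real (m - l + 1) * es A (l - 1) x) \<le> real l * es A l x * (real (m - k + 1) * es A (k - 1) x)"
    using tk frac_le_iff[OF d1 d2] unfolding t_def by (simp add: ac_simps)
  then show ?thesis unfolding m_def by (simp add: ac_simps)
qed

lemma newton_chain_unnorm:
  assumes fA: "finite A" and G: "Gam A K x" and Km: "K \<le> card A"
    and l: "1 \<le> l" "l \<le> k" "k \<le> K"
  shows "es A k x * es A (l - 1) x \<le> es A l x * es A (k - 1) x"
proof -
  have C: "real k * real (card A - l + 1) * (es A k x * es A (l - 1) x)
         \<le> real l * real (card A - k + 1) * (es A l x * es A (k - 1) x)"
    by (rule newton_chain[OF assms])
  have pos: "es A l x * es A (k - 1) x > 0" "es A k x * es A (l - 1) x > 0"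
    using Gam_pos[OF fA G] l by auto
  have c: "real l * real (card A - k + 1) \<le> real k * real (card A - l + 1)"
    using l Km by (intro mult_mono) auto
  have cpos: "real k * real (card A - l + 1) > 0" using l Km by simp
  have "real k * real (card A - l + 1) * (es A k x * es A (l - 1) x)
        \<le> real k * real (card A - l + 1) * (es A l x * es A (k - 1) x)"
    using C c pos(1) by (meson order_trans mult_right_mono less_imp_le)
  then show ?thesis using cpos by (meson mult_le_cancel_left_pos)
qed

lemma es_star:
  assumes fV: "finite V" and b0: "b \<ge> 0" and bV: "\<forall>p\<in>V. x p \<ge> b" and i: "1 \<le> i"
  shows "b * ((real (card V) - real (i - 1)) * es V (i - 1) x) \<le> real i * es V i x"
proof -
  have I1: "(\<Sum>p\<in>V. es (V - {p}) (i - 1) x) = (real (card V) - real (i - 1)) * es V (i - 1) x"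
    by (rule es_I1[OF fV])
  have I2: "(\<Sum>p\<in>V. x p * es (V - {p}) (i - 1) x) = real (Suc (i - 1)) * es V (Suc (i - 1)) x"
    by (rule es_I2[OF fV])
  have nn: "\<And>p. p \<in> V \<Longrightarrow> es (V - {p}) (i - 1) x \<ge> 0"
    using fV bV b0 by (intro es_nonneg) auto
  have "b * (\<Sum>p\<in>V. es (V - {p}) (i - 1) x) = (\<Sum>p\<in>V. b * es (V - {p}) (i - 1) x)"
    by (simp add: sum_distrib_left)
  also have "\<dots> \<le> (\<Sum>p\<in>V. x p * es (V - {p}) (i - 1) x)"
    using nn bV by (intro sum_mono mult_right_mono) auto
  finally show ?thesis using I1 I2 i by simp
qed

definition kap :: "nat \<Rightarrow> nat \<Rightarrow> real" where "kap n j = real (n - 1 - j) / real j"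
definition rho :: "nat \<Rightarrow> nat \<Rightarrow> real" where
  "rho n j = real j * real (n - 2 - j) / (real (j + 1) * real (n - 1 - j))"
definition KK :: "nat \<Rightarrow> nat \<Rightarrow> real" where "KK n j = (1 + kap n j) / (kap n j * (1 - rho n j))"
definition CLT :: "nat \<Rightarrow> nat \<Rightarrow> real" where "CLT n j = (if j = 0 then 1 else 1 + KK n j / kap n j)"

lemma consts_ok:
  assumes "1 \<le> j" "j + 2 \<le> n"
  shows "kap n j > 0" "rho n j \<ge> 0" "rho n j < 1" "KK n j \<ge> 1" "CLT n j \<ge> 1"
proof -
  show k: "kap n j > 0" using assms unfolding kap_def by simp
  show "rho n j \<ge> 0" unfolding rho_def by simp
  have h: "real j * real (n - 2 - j) < real (j + 1) * real (n - 1 - j)"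
    using assms by (intro mult_le_less_imp_less) auto
  have pos: "real (j + 1) * real (n - 1 - j) > 0" using assms by simp
  show r: "rho n j < 1" unfolding rho_def by (rule iffD2[OF divide_less_eq_1_pos[OF pos] h])
  have r0: "rho n j \<ge> 0" unfolding rho_def by simp
  have "kap n j * (1 - rho n j) \<le> kap n j" using k r0 by (simp add: mult_left_le)
  moreover have "kap n j * (1 - rho n j) > 0" using k r by simp
  ultimately show KK: "KK n j \<ge> 1" unfolding KK_def by simp
  show "CLT n j \<ge> 1" unfolding CLT_def using KK k by simp
qed

lemma CLT_ge1: "CLT n j \<ge> 1 \<or> \<not> (1 \<le> j \<and> j + 2 \<le> n)"
  using consts_ok by blast

theorem LT:
  assumes fA: "finite A" and cA: "card A = n" and G: "Gam A k x" and kn: "k + 1 \<le> n"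
    and aA: "a \<in> A" and bA: "b \<in> A" and ab: "a \<noteq> b" and xab: "x a \<le> x b"
    and xbp: "\<forall>p\<in>A. p \<noteq> a \<longrightarrow> p \<noteq> b \<longrightarrow> x b \<le> x p" and j: "j + 1 \<le> k"
  shows "es A j x \<le> CLT n j * es (A - {b}) j x"
proof (cases "j = 0")
  case True
  then show ?thesis using fA by (simp add: CLT_def)
next
  case False
  then have j1: "1 \<le> j" by simp
  have jn: "j + 2 \<le> n" using j kn by simp
  note cs = consts_ok[OF j1 jn]
  define B where "B = A - {b}"
  define V where "V = B - {a}"
  have fB: "finite B" "finite V" using fA B_def V_def by auto
  have aB: "a \<in> B" using aA ab B_def by simp
  have cV: "card V = n - 2" using cA aA bA ab unfolding V_def B_def
    by (simp add: card_Diff_singleton_if)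
  have GB: "Gam B (k - 1) x" unfolding B_def by (rule Gam_del[OF fA bA G])
  have eBj: "es B j x > 0" using Gam_pos[OF fB(1) GB] j by simp
  have eAj: "es A j x = es B j x + x b * es B (j - 1) x"
    using es_del[OF fA bA, of "j - 1" x] j1 B_def by simp
  have CLTge: "CLT n j \<ge> 1 + 1 / kap n j"
    using cs j1 unfolding CLT_def by (simp add: divide_right_mono)
  show ?thesis
  proof (cases "x b \<le> 0")
    case True
    have "j - 1 \<le> k - 1" using j by simp
    then have "es B (j - 1) x > 0" using Gam_pos[OF fB(1) GB, of "j - 1"] by simp
    then have "es B (j - 1) x \<ge> 0" by simp
    then have "x b * es B (j - 1) x \<le> 0" using True by (simp add: mult_nonpos_nonneg)
    then have "es A j x \<le> es B j x" using eAj by simp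
    also have "\<dots> \<le> CLT n j * es B j x" using cs(5) eBj by simp
    finally show ?thesis using B_def by simp
  next
    case False
    then have b0: "x b > 0" by simp
    have Vb: "\<forall>p\<in>V. x p \<ge> x b" using xbp unfolding V_def B_def by auto
    have Vpos: "\<forall>p\<in>V. x p > 0" using Vb b0 by fastforce
    define s where "s i = es V i x" for i
    have spos: "\<And>i. i \<le> n - 2 \<Longrightarrow> s i > 0" unfolding s_def using es_pos[OF fB(2) Vpos] cV by simp
    have snn: "\<And>i. s i \<ge> 0" unfolding s_def using es_nonneg[OF fB(2)] Vpos by (simp add: less_imp_le)
    have star: "\<And>i. 1 \<le> i \<Longrightarrow> x b * ((real (n - 2) - real (i - 1)) * s (i - 1)) \<le> real i * s i"
      unfolding s_def using es_star[OF fB(2) _ Vb] b0 cV by simp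
    have eBj': "es B j x = s j + x a * s (j - 1)"
      using es_del[OF fB(1) aB, of "j - 1" x] j1 V_def s_def by simp
    have kapj: "kap n j = real (n - 1 - j) / real j" by (simp add: kap_def)
    have key: "x b * s (j - 1) \<le> s j / kap n j"
    proof -
      have "real (n - 2) - real (j - 1) = real (n - 1 - j)" using jn j1 by simp
      then have h: "x b * (real (n - 1 - j) * s (j - 1)) \<le> real j * s j" using star[OF j1] by simp
      have nj: "real (n - 1 - j) > 0" using jn by simp
      have "x b * s (j - 1) * real (n - 1 - j) \<le> real j * s j" using h by (simp add: ac_simps)
      then have "x b * s (j - 1) \<le> real j * s j / real (n - 1 - j)" using nj by (simp add: le_divide_eq)
      then show ?thesis unfolding kapj by (simp add: mult.commute)
    qed
    show ?thesis
    proof (cases "x a \<ge> 0")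
      case True
      have lhs: "x b * es B (j - 1) x \<le> es B j x / kap n j"
      proof (cases "j = 1")
        case True
        have "x b * es B (j - 1) x = x b * s (j - 1)" using True fB s_def by simp
        also have "\<dots> \<le> s j / kap n j" by (rule key)
        also have "\<dots> \<le> es B j x / kap n j"
          using eBj' \<open>x a \<ge> 0\<close> snn cs(1) by (intro divide_right_mono) auto
        finally show ?thesis .
      next
        case False
        then have j2: "2 \<le> j" using j1 by simp
        have eBj1: "es B (j - 1) x = s (j - 1) + x a * s (j - 2)"
          using es_del[OF fB(1) aB, of "j - 2" x] j2 V_def s_def
          by (metis Suc_diff_Suc Suc_1 diff_diff_left less_le_trans one_less_numeral_iff plus_1_eq_Suc semiring_norm(76))
        have key2: "x b * s (j - 2) \<le> s (j - 1) / kap n j"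
        proof -
          have "real (n - 2) - real (j - 1 - 1) = real (n - j)" using jn j2 by simp
          then have h: "x b * (real (n - j) * s (j - 2)) \<le> real (j - 1) * s (j - 1)"
            using star[of "j - 1"] j2 by (simp add: numeral_2_eq_2)
          have c1: "real (j - 1) * real (n - 1 - j) \<le> real j * real (n - j)"
            using jn by (intro mult_mono) auto
          have nj: "real (n - 1 - j) > 0" "real (n - j) > 0" using jn by auto
          have "x b * s (j - 2) * real (n - j) * real (n - 1 - j) \<le> real (j - 1) * s (j - 1) * real (n - 1 - j)"
            using mult_right_mono[OF h, of "real (n - 1 - j)"] by (simp add: ac_simps)
          also have "\<dots> \<le> real j * real (n - j) * s (j - 1)"
            using mult_right_mono[OF c1 snn[of "j - 1"]] by (simp add: ac_simps)
          finally have "(x b * s (j - 2) * real (n - 1 - j)) * real (n - j) \<le> (real j * s (j - 1)) * real (n - j)"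
            by (simp add: ac_simps)
          then have "x b * s (j - 2) * real (n - 1 - j) \<le> real j * s (j - 1)" using nj by simp
          then have "x b * s (j - 2) \<le> real j * s (j - 1) / real (n - 1 - j)" using nj by (simp add: le_divide_eq)
          then show ?thesis unfolding kapj by (simp add: mult.commute)
        qed
        have "x b * es B (j - 1) x = x b * s (j - 1) + x a * (x b * s (j - 2))"
          unfolding eBj1 by (simp add: algebra_simps)
        also have "\<dots> \<le> s j / kap n j + x a * (s (j - 1) / kap n j)"
          using key key2 \<open>x a \<ge> 0\<close> by (intro add_mono mult_left_mono) auto
        also have "\<dots> = es B j x / kap n j" unfolding eBj' by (simp add: add_divide_distrib)
        finally show ?thesis .
      qed
      have "es A j x \<le> es B j x + es B j x / kap n j" using eAj lhs by simp
      also have "\<dots> = (1 + 1 / kap n j) * es B j x" by (simp add: field_simps)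
      also have "\<dots> \<le> CLT n j * es B j x" using CLTge eBj by (intro mult_right_mono) auto
      finally show ?thesis using B_def by simp
    next
      case False
      then have a0: "x a < 0" by simp
      define D where "D = es B j x"
      define P where "P = s (j - 1)"
      define Q where "Q = s j"
      define R where "R = s (j + 1)"
      have P0: "P > 0" "Q > 0" using spos jn unfolding P_def Q_def by auto
      have R0: "R \<ge> 0" using snn R_def by simp
      have eB1: "es B (j - 1) x \<le> P"
      proof (cases "j = 1")
        case True then show ?thesis using fB P_def s_def by simp
      next
        case False
        then have j2: "2 \<le> j" using j1 by simp
        have "es B (j - 1) x = s (j - 1) + x a * s (j - 2)"
          using es_del[OF fB(1) aB, of "j - 2" x] j2 V_def s_def
          by (metis Suc_diff_Suc Suc_1 diff_diff_left less_le_trans one_less_numeral_iff plus_1_eq_Suc semiring_norm(76))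
        moreover have "x a * s (j - 2) \<le> 0" using a0 snn by (simp add: mult_nonpos_nonneg)
        ultimately show ?thesis unfolding P_def by simp
      qed
      have DQ: "D = Q + x a * P" unfolding D_def P_def Q_def using eBj' by simp
      have NV: "real (j + 1) * real (n - 2 - j + 1) * (P * R) \<le> real j * real (n - 2 - j) * Q^2"
        using newton_es[OF fB(2) j1, of x] cV unfolding P_def Q_def R_def s_def by simp
      have rhoPR: "P * R \<le> rho n j * Q^2"
      proof -
        have e: "n - 2 - j + 1 = n - 1 - j" using jn by simp
        define c where "c = real (j + 1) * real (n - 1 - j)"
        define d where "d = real j * real (n - 2 - j)"
        have pos: "c > 0" using jn unfolding c_def by simp
        have NV': "c * (P * R) \<le> d * Q^2" using NV[unfolded e] unfolding c_def d_def .
        have "P * R \<le> d * Q^2 / c" using NV' pos_le_divide_eq[OF pos] by (metis mult.commute)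
        moreover have "rho n j = d / c" unfolding rho_def c_def d_def by simp
        ultimately show ?thesis by simp
      qed
      have eAj1: "es A (j + 1) x = R + x a * Q + x b * D"
      proof -
        have "es A (Suc j) x = es B (Suc j) x + x b * es B j x"
          using es_del[OF fA bA, of j x] B_def by simp
        moreover have "es B (Suc j) x = s (Suc j) + x a * s j"
          using es_del[OF fB(1) aB, of j x] V_def s_def by simp
        ultimately show ?thesis unfolding R_def Q_def D_def by simp
      qed
      have pA: "es A (j + 1) x > 0" using Gam_pos[OF fA G] j by simp
      have main: "P * R + (D - Q) * Q + x b * P * D > 0"
      proof -
        have "P * (R + x a * Q + x b * D) > 0" using pA eAj1 P0 by simp
        moreover have "P * (R + x a * Q + x b * D) = P * R + (x a * P) * Q + x b * P * D"
          by (simp add: algebra_simps)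
        moreover have "x a * P = D - Q" using DQ by simp
        ultimately show ?thesis by simp
      qed
      have kp: "kap n j > 0" using cs by simp
      have bP: "x b * P \<le> Q / kap n j" using key P_def Q_def by simp
      have D0: "D > 0"
      proof (rule ccontr)
        assume "\<not> D > 0"
        then have "D \<le> 0" by simp
        then have "x b * P * D \<le> 0" using b0 P0 by (simp add: mult_nonneg_nonpos)
        moreover have "D * Q \<le> 0" using \<open>D \<le> 0\<close> P0 by (simp add: mult_nonpos_nonneg)
        moreover have "P * R \<le> rho n j * Q^2" by (rule rhoPR)
        moreover have "(1 - rho n j) * Q^2 > 0" using cs P0 by simp
        moreover have "(D - Q) * Q = D * Q - Q^2" by (simp add: algebra_simps power2_eq_square)
        ultimately show False using main by (simp add: algebra_simps)
      qed
      have QK: "Q \<le> KK n j * D"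
      proof -
        have h1: "x b * P * D \<le> Q / kap n j * D" by (rule mult_right_mono[OF bP]) (use D0 in simp)
        have "(D - Q) * Q = D * Q - Q^2" by (simp add: algebra_simps power2_eq_square)
        then have "Q / kap n j * D + D * Q > (1 - rho n j) * Q^2"
          using main h1 rhoPR by (simp add: algebra_simps)
        then have "Q * (D / kap n j + D) > Q * ((1 - rho n j) * Q)"
          by (simp add: algebra_simps power2_eq_square)
        then have "D / kap n j + D > (1 - rho n j) * Q" using P0 by simp
        then have "D * (1 + kap n j) > kap n j * (1 - rho n j) * Q" using kp
          by (simp add: field_simps)
        moreover have "kap n j * (1 - rho n j) > 0" using cs by simp
        ultimately have "Q < D * (1 + kap n j) / (kap n j * (1 - rho n j))"
          by (simp add: less_divide_eq ac_simps)
        then show ?thesis unfolding KK_def by (simp add: mult.commute)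
      qed
      have "es A j x \<le> D + x b * P"
        using eAj eB1 b0 unfolding D_def by (simp add: mult_left_mono)
      also have "\<dots> \<le> D + Q / kap n j" using bP by simp
      also have "\<dots> \<le> D + KK n j * D / kap n j" using QK kp by (simp add: divide_right_mono)
      also have "\<dots> = CLT n j * D" using j1 unfolding CLT_def by (simp add: algebra_simps)
      finally show ?thesis using D_def B_def by simp
    qed
  qed
qed

lemma es_deriv:
  assumes "finite A"
  shows "((\<lambda>t. es A j (\<lambda>i. x i + t * v i)) has_real_derivative
          (if j = 0 then 0 else (\<Sum>p\<in>A. v p * es (A - {p}) (j - 1) (\<lambda>i. x i + t0 * v i)))) (at t0)"
  using assms
proof (induction A arbitrary: j rule: finite_induct)
  case empty
  have "(\<lambda>t. es {} j (\<lambda>i. x i + t * v i)) = (\<lambda>t. if j = 0 then 1 else 0)"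
    by (rule ext) (cases j, simp_all add: es_big)
  then show ?case by (cases "j = 0") simp_all
next
  case (insert a F)
  let ?y = "\<lambda>t. (\<lambda>i. x i + t * v i)"
  show ?case
  proof (cases j)
    case 0
    have "(\<lambda>t. es (insert a F) j (?y t)) = (\<lambda>t. 1)" using 0 insert.hyps by simp
    then show ?thesis using 0 by simp
  next
    case (Suc j')
    have feq: "(\<lambda>t. es (insert a F) j (?y t)) = (\<lambda>t. es F (Suc j') (?y t) + (x a + t * v a) * es F j' (?y t))"
      unfolding Suc by (rule ext) (simp add: es_insert insert.hyps)
    have d1: "((\<lambda>t. es F (Suc j') (?y t)) has_real_derivative (\<Sum>p\<in>F. v p * es (F - {p}) j' (?y t0))) (at t0)"
      using insert.IH[of "Suc j'"] by simp
    have d2: "((\<lambda>t. x a + t * v a) has_real_derivative v a) (at t0)"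
      by (auto intro!: derivative_eq_intros)
    have d3: "((\<lambda>t. es F j' (?y t)) has_real_derivative
          (if j' = 0 then 0 else (\<Sum>p\<in>F. v p * es (F - {p}) (j' - 1) (?y t0)))) (at t0)"
      by (rule insert.IH)
    have D: "((\<lambda>t. es F (Suc j') (?y t) + (x a + t * v a) * es F j' (?y t)) has_real_derivative
         (\<Sum>p\<in>F. v p * es (F - {p}) j' (?y t0)) +
         (v a * es F j' (?y t0) + (if j' = 0 then 0 else (\<Sum>p\<in>F. v p * es (F - {p}) (j' - 1) (?y t0))) * (x a + t0 * v a))) (at t0)"
      by (rule DERIV_add[OF d1 DERIV_mult[OF d2 d3]])
    have eqs: "\<And>p. p \<in> F \<Longrightarrow> insert a F - {p} = insert a (F - {p})" using insert.hyps by auto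
    have val: "(\<Sum>p\<in>insert a F. v p * es (insert a F - {p}) j' (?y t0))
        = (\<Sum>p\<in>F. v p * es (F - {p}) j' (?y t0)) +
         (v a * es F j' (?y t0) + (x a + t0 * v a) * (if j' = 0 then 0 else (\<Sum>p\<in>F. v p * es (F - {p}) (j' - 1) (?y t0))))"
    proof (cases j')
      case 0
      then show ?thesis using insert.hyps by (simp add: sum.insert)
    next
      case (Suc j'')
      have "(\<Sum>p\<in>F. v p * es (insert a F - {p}) j' (?y t0))
          = (\<Sum>p\<in>F. v p * es (F - {p}) j' (?y t0) + (x a + t0 * v a) * (v p * es (F - {p}) j'' (?y t0)))"
        unfolding Suc using insert.hyps eqs by (intro sum.cong) (auto simp: es_insert algebra_simps)
      also have "\<dots> = (\<Sum>p\<in>F. v p * es (F - {p}) j' (?y t0)) + (x a + t0 * v a) * (\<Sum>p\<in>F. v p * es (F - {p}) j'' (?y t0))"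
        by (simp add: sum.distrib sum_distrib_left)
      finally show ?thesis using insert.hyps Suc by (simp add: sum.insert algebra_simps)
    qed
    have vv: "(\<Sum>p\<in>F. v p * es (F - {p}) j' (?y t0)) +
         (v a * es F j' (?y t0) + (if j' = 0 then 0 else (\<Sum>p\<in>F. v p * es (F - {p}) (j' - 1) (?y t0))) * (x a + t0 * v a))
       = (if j = 0 then 0 else (\<Sum>p\<in>insert a F. v p * es (insert a F - {p}) (j - 1) (?y t0)))"
      using val Suc by (simp only: mult.commute) simp
    show ?thesis unfolding feq using D unfolding vv .
  qed
qed

definition fp :: "nat set \<Rightarrow> nat \<Rightarrow> nat \<Rightarrow> (nat \<Rightarrow> real) \<Rightarrow> nat \<Rightarrow> real" where
  "fp A k l y p = (es (A - {p}) (k - 1) y * es A l y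
      - es A k y * (if l = 0 then 0 else es (A - {p}) (l - 1) y)) / (es A l y)^2"

lemma sum_upd: fixes \<kappa> :: "nat \<Rightarrow> real" shows "i < n \<Longrightarrow> (\<Sum>j<n. (\<kappa>(i := t)) j) = (\<Sum>j<n. \<kappa> j) + (t - \<kappa> i)"
proof -
  assume i: "i < n"
  have a: "(\<Sum>j<n. (\<kappa>(i := t)) j) = t + (\<Sum>j\<in>{..<n} - {i}. (\<kappa>(i := t)) j)"
    using sum.remove[of "{..<n}" i "\<kappa>(i := t)"] i by simp
  have b: "(\<Sum>j<n. \<kappa> j) = \<kappa> i + (\<Sum>j\<in>{..<n} - {i}. \<kappa> j)"
    using sum.remove[of "{..<n}" i \<kappa>] i by simp
  have c: "(\<Sum>j\<in>{..<n} - {i}. (\<kappa>(i := t)) j) = (\<Sum>j\<in>{..<n} - {i}. \<kappa> j)"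
    by (intro sum.cong) auto
  show ?thesis using a b c by simp
qed

lemma sumv:
  fixes \<theta> \<mu> :: real and g :: "nat \<Rightarrow> real"
  assumes "finite A" "i \<in> A"
  shows "(\<Sum>p\<in>A. (\<theta> - (if p = i then \<mu> else 0)) * g p) = \<theta> * sum g A - \<mu> * g i"
proof -
  have "(\<Sum>p\<in>A. (\<theta> - (if p = i then \<mu> else 0)) * g p) = (\<Sum>p\<in>A. \<theta> * g p - (if p = i then \<mu> * g p else 0))"
    by (intro sum.cong) (auto simp: algebra_simps)
  also have "\<dots> = \<theta> * sum g A - (\<Sum>p\<in>A. (if p = i then \<mu> * g p else 0))"
    by (simp add: sum_subtractf sum_distrib_left)
  also have "(\<Sum>p\<in>A. (if p = i then \<mu> * g p else 0)) = \<mu> * g i"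
    using assms by (simp add: sum.delta')
  finally show ?thesis .
qed

lemma Fii_formula:
  assumes lk: "l < k" and i: "i < n" and G: "Gam {..<n} k (lam \<theta> \<mu> n \<kappa>)"
  shows "Fii n k l \<theta> \<mu> \<kappa> i = \<theta> * (\<Sum>p\<in>{..<n}. fp {..<n} k l (lam \<theta> \<mu> n \<kappa>) p) - \<mu> * fp {..<n} k l (lam \<theta> \<mu> n \<kappa>) i"
proof -
  define A where "A = {..<n}"
  define y0 where "y0 = lam \<theta> \<mu> n \<kappa>"
  define v where "v p = \<theta> - (if p = i then \<mu> else 0)" for p
  define x where "x p = y0 p - \<kappa> i * v p" for p
  have fA: "finite A" and iA: "i \<in> A" using i A_def by auto
  have yt: "\<And>t. lam \<theta> \<mu> n (\<kappa>(i := t)) = (\<lambda>p. x p + t * v p)"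
    by (rule ext, simp only: lam_def sum_upd[OF i]) (simp add: x_def v_def y0_def lam_def algebra_simps)
  have y0e: "(\<lambda>p. x p + \<kappa> i * v p) = y0" by (rule ext) (simp add: x_def)
  have F: "(\<lambda>t. Fq n k l \<theta> \<mu> (\<kappa>(i := t))) = (\<lambda>t. es A k (\<lambda>p. x p + t * v p) / es A l (\<lambda>p. x p + t * v p))"
    by (rule ext) (simp add: Fq_def esym_es yt A_def)
  define a where "a p = es (A - {p}) (k - 1) y0" for p
  define b where "b p = (if l = 0 then 0 else es (A - {p}) (l - 1) y0)" for p
  have dk: "((\<lambda>t. es A k (\<lambda>p. x p + t * v p)) has_real_derivative (\<theta> * sum a A - \<mu> * a i)) (at (\<kappa> i))"
  proof -
    have "((\<lambda>t. es A k (\<lambda>p. x p + t * v p)) has_real_derivative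
          (if k = 0 then 0 else (\<Sum>p\<in>A. v p * es (A - {p}) (k - 1) (\<lambda>p. x p + \<kappa> i * v p)))) (at (\<kappa> i))"
      by (rule es_deriv[OF fA])
    then have "((\<lambda>t. es A k (\<lambda>p. x p + t * v p)) has_real_derivative
          (if k = 0 then 0 else (\<Sum>p\<in>A. v p * es (A - {p}) (k - 1) y0))) (at (\<kappa> i))"
      unfolding y0e .
    moreover have "(if k = 0 then 0 else (\<Sum>p\<in>A. v p * es (A - {p}) (k - 1) y0))
        = \<theta> * sum a A - \<mu> * a i"
      using lk sumv[OF fA iA, of \<theta> \<mu> a] unfolding a_def v_def by simp
    ultimately show ?thesis by simp
  qed
  have dl: "((\<lambda>t. es A l (\<lambda>p. x p + t * v p)) has_real_derivative (\<theta> * sum b A - \<mu> * b i)) (at (\<kappa> i))"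
  proof -
    have "((\<lambda>t. es A l (\<lambda>p. x p + t * v p)) has_real_derivative
          (if l = 0 then 0 else (\<Sum>p\<in>A. v p * es (A - {p}) (l - 1) (\<lambda>p. x p + \<kappa> i * v p)))) (at (\<kappa> i))"
      by (rule es_deriv[OF fA])
    then have "((\<lambda>t. es A l (\<lambda>p. x p + t * v p)) has_real_derivative
          (if l = 0 then 0 else (\<Sum>p\<in>A. v p * es (A - {p}) (l - 1) y0))) (at (\<kappa> i))"
      unfolding y0e .
    moreover have "(if l = 0 then 0 else (\<Sum>p\<in>A. v p * es (A - {p}) (l - 1) y0))
        = \<theta> * sum b A - \<mu> * b i"
    proof (cases "l = 0")
      case True then show ?thesis unfolding b_def by simp
    next
      case False
      then show ?thesis using sumv[OF fA iA, of \<theta> \<mu> b] unfolding b_def v_def by simp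
    qed
    ultimately show ?thesis by simp
  qed
  have sl: "es A l y0 > 0" using Gam_pos[OF fA, of k y0 l] G lk A_def y0_def by simp
  have val: "es A l (\<lambda>p. x p + \<kappa> i * v p) = es A l y0" "es A k (\<lambda>p. x p + \<kappa> i * v p) = es A k y0"
    unfolding y0e by simp_all
  have D: "((\<lambda>t. Fq n k l \<theta> \<mu> (\<kappa>(i := t))) has_real_derivative
      ((\<theta> * sum a A - \<mu> * a i) * es A l y0 - es A k y0 * (\<theta> * sum b A - \<mu> * b i)) / (es A l y0 * es A l y0)) (at (\<kappa> i))"
    unfolding F using DERIV_divide[OF dk dl] sl val by simp
  have Fii: "Fii n k l \<theta> \<mu> \<kappa> i = ((\<theta> * sum a A - \<mu> * a i) * es A l y0 - es A k y0 * (\<theta> * sum b A - \<mu> * b i)) / (es A l y0 * es A l y0)"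
    unfolding Fii_def using DERIV_imp_deriv[OF D] by simp
  have fpe: "\<And>p. fp A k l y0 p = (a p * es A l y0 - es A k y0 * b p) / (es A l y0)^2"
    unfolding fp_def a_def b_def by simp
  have sumfp: "(\<Sum>p\<in>A. fp A k l y0 p) = (es A l y0 * sum a A - es A k y0 * sum b A) / (es A l y0)^2"
    unfolding fpe by (simp add: sum_divide_distrib[symmetric] sum_subtractf sum_distrib_left sum_distrib_right mult.commute)
  then have "\<theta> * (\<Sum>p\<in>A. fp A k l y0 p) - \<mu> * fp A k l y0 i = Fii n k l \<theta> \<mu> \<kappa> i"
    unfolding Fii sumfp fpe[of i] using sl by (simp add: field_simps power2_eq_square)
  then show ?thesis unfolding A_def y0_def by simp
qed

lemma fcore:
  assumes fA: "finite A" and pA: "p \<in> A" and G: "Gam A k y" and lk: "l < k" and kc: "k + 1 \<le> card A"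
  shows "fp A k l y p * (es A l y)^2 \<ge> (1 - real l / real k) * (es (A - {p}) (k - 1) y * es (A - {p}) l y)"
    and "es (A - {p}) (k - 1) y > 0" and "es (A - {p}) l y > 0"
proof -
  define e where "e j = es (A - {p}) j y" for j
  have fA': "finite (A - {p})" using fA by simp
  have G': "Gam (A - {p}) (k - 1) y" by (rule Gam_del[OF fA pA G])
  have ek1: "e (k - 1) > 0" using Gam_pos[OF fA' G'] e_def by simp
  have el: "e l > 0" using Gam_pos[OF fA' G'] e_def lk by simp
  show "es (A - {p}) (k - 1) y > 0" "es (A - {p}) l y > 0" using ek1 el e_def by auto
  have sl: "es A l y > 0" using Gam_pos[OF fA G, of l] lk by simp
  have kpos: "real k > 0" using lk by simp
  have fac: "1 - real l / real k \<le> 1" "1 - real l / real k \<ge> 0" using lk kpos by auto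
  have prod: "e (k - 1) * e l > 0" using ek1 el by simp
  show "fp A k l y p * (es A l y)^2 \<ge> (1 - real l / real k) * (es (A - {p}) (k - 1) y * es (A - {p}) l y)"
  proof (cases "l = 0")
    case True
    have "fp A k l y p * (es A l y)^2 = e (k - 1)" using True fA unfolding fp_def e_def by simp
    then show ?thesis using True fA e_def by simp
  next
    case False
    then have l1: "1 \<le> l" by simp
    have sl': "es A l y = e l + y p * e (l - 1)" using es_del[OF fA pA, of "l - 1" y] l1 e_def by simp
    have sk': "es A k y = e k + y p * e (k - 1)" using es_del[OF fA pA, of "k - 1" y] lk e_def by simp
    have eq: "fp A k l y p * (es A l y)^2 = e (k - 1) * e l - e k * e (l - 1)"
    proof -
      have "fp A k l y p * (es A l y)^2 = e (k - 1) * es A l y - es A k y * e (l - 1)"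
        using sl False unfolding fp_def e_def by simp
      also have "\<dots> = e (k - 1) * e l - e k * e (l - 1)" unfolding sl' sk' by (simp add: algebra_simps)
      finally show ?thesis .
    qed
    have el1: "e (l - 1) > 0" using Gam_pos[OF fA' G'] e_def lk by simp
    show ?thesis
    proof (cases "e k \<le> 0")
      case True
      then have "e k * e (l - 1) \<le> 0" using el1 by (simp add: mult_nonpos_nonneg)
      moreover have "(1 - real l / real k) * (e (k - 1) * e l) \<le> e (k - 1) * e l"
        using fac prod by (simp add: mult_left_le_one_le)
      ultimately show ?thesis using eq e_def by simp
    next
      case False
      have Gk: "Gam (A - {p}) k y"
        unfolding Gam_def
      proof (intro allI impI)
        fix j assume j: "1 \<le> j \<and> j \<le> k"
        show "es (A - {p}) j y > 0"
        proof (cases "j = k")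
          case True then show ?thesis using False e_def by simp
        next
          case False
          then have "j \<le> k - 1" using j by arith
          then show ?thesis using Gam_pos[OF fA' G', of j] by simp
        qed
      qed
      have cA: "card (A - {p}) = card A - 1" using pA fA by simp
      have C: "real k * real (card (A - {p}) - l + 1) * (e k * e (l - 1))
         \<le> real l * real (card (A - {p}) - k + 1) * (e l * e (k - 1))"
        unfolding e_def by (rule newton_chain[OF fA' Gk]) (use kc cA l1 lk in auto)
      define M where "M = real (card (A - {p}) - l + 1)"
      have M0: "M > 0" unfolding M_def by simp
      have le: "real (card (A - {p}) - k + 1) \<le> M" unfolding M_def using lk by simp
      have sec: "real l * real (card (A - {p}) - k + 1) * (e l * e (k - 1)) \<le> real l * M * (e l * e (k - 1))"
        using le prod by (intro mult_right_mono mult_left_mono) (auto simp: mult.commute)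
      have "M * (real k * (e k * e (l - 1))) \<le> M * (real l * (e l * e (k - 1)))"
        using order_trans[OF C sec] unfolding M_def by (simp only: ac_simps)
      then have "real k * (e k * e (l - 1)) \<le> real l * (e l * e (k - 1))"
        by (rule iffD1[OF mult_le_cancel_left_pos[OF M0]])
      then have "e k * e (l - 1) \<le> real l / real k * (e l * e (k - 1))"
        using kpos by (simp add: field_simps)
      then show ?thesis using eq e_def by (simp add: algebra_simps)
    qed
  qed
qed

lemma fp_nonneg:
  assumes fA: "finite A" and pA: "p \<in> A" and G: "Gam A k y" and lk: "l < k" and kc: "k + 1 \<le> card A"
  shows "fp A k l y p \<ge> 0"
proof -
  have a: "fp A k l y p * (es A l y)^2 \<ge> (1 - real l / real k) * (es (A - {p}) (k - 1) y * es (A - {p}) l y)"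
    and b: "es (A - {p}) (k - 1) y > 0" "es (A - {p}) l y > 0" using fcore[OF assms] by auto
  have "1 - real l / real k \<ge> 0" using lk by simp
  then have "(1 - real l / real k) * (es (A - {p}) (k - 1) y * es (A - {p}) l y) \<ge> 0" using b by simp
  then have "fp A k l y p * (es A l y)^2 \<ge> 0" using a by linarith
  moreover have "(es A l y)^2 > 0" using Gam_pos[OF fA G, of l] lk by simp
  ultimately show ?thesis by (simp add: zero_le_mult_iff)
qed

lemma S_eq:
  assumes fA: "finite A" and G: "Gam A k y" and lk: "l < k"
  shows "(\<Sum>p\<in>A. fp A k l y p) * (es A l y)^2
       = (real (card A) - real (k - 1)) * es A (k - 1) y * es A l y
         - (if l = 0 then 0 else (real (card A) - real (l - 1)) * es A k y * es A (l - 1) y)"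
proof -
  have sl: "es A l y > 0" using Gam_pos[OF fA G, of l] lk by simp
  have "(\<Sum>p\<in>A. fp A k l y p) * (es A l y)^2
      = (\<Sum>p\<in>A. es (A - {p}) (k - 1) y * es A l y - es A k y * (if l = 0 then 0 else es (A - {p}) (l - 1) y))"
    unfolding fp_def using sl by (simp add: sum_divide_distrib[symmetric])
  also have "\<dots> = es A l y * (\<Sum>p\<in>A. es (A - {p}) (k - 1) y) - es A k y * (if l = 0 then 0 else (\<Sum>p\<in>A. es (A - {p}) (l - 1) y))"
    by (simp add: sum_subtractf sum_distrib_left mult.commute)
  also have "\<dots> = (real (card A) - real (k - 1)) * es A (k - 1) y * es A l y
         - (if l = 0 then 0 else (real (card A) - real (l - 1)) * es A k y * es A (l - 1) y)"
    by (simp add: es_I1[OF fA] ac_simps)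
  finally show ?thesis .
qed

lemma S_bounds:
  assumes fA: "finite A" and G: "Gam A k y" and lk: "l < k" and kc: "k \<le> card A"
  shows "(\<Sum>p\<in>A. fp A k l y p) \<ge> (real (card A) - real k + 1) * (1 - real l / real k) * (es A (k - 1) y / es A l y)"
    and "(\<Sum>p\<in>A. fp A k l y p) \<le> (real (card A) - real k + 1) * (es A (k - 1) y / es A l y)"
proof -
  define n where "n = card A"
  define S where "S = (\<Sum>p\<in>A. fp A k l y p)"
  have sl: "es A l y > 0" using Gam_pos[OF fA G, of l] lk by simp
  have sk: "es A k y > 0" "es A (k - 1) y > 0" using Gam_pos[OF fA G, of k] Gam_pos[OF fA G, of "k - 1"] by auto
  have k1: "real (k - 1) = real k - 1" using lk by simp
  have E: "S * (es A l y)^2 = (real n - real k + 1) * es A (k - 1) y * es A l y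
         - (if l = 0 then 0 else (real n - real (l - 1)) * es A k y * es A (l - 1) y)"
    using S_eq[OF fA G lk] k1 unfolding S_def n_def by simp
  have T: "(if l = 0 then 0 else (real n - real (l - 1)) * es A k y * es A (l - 1) y)
     \<le> (real n - real k + 1) * (real l / real k) * (es A (k - 1) y * es A l y)"
   and T0: "(if l = 0 then 0 else (real n - real (l - 1)) * es A k y * es A (l - 1) y) \<ge> 0"
  proof -
    have "(if l = 0 then 0 else (real n - real (l - 1)) * es A k y * es A (l - 1) y)
     \<le> (real n - real k + 1) * (real l / real k) * (es A (k - 1) y * es A l y) \<and>
     (if l = 0 then 0 else (real n - real (l - 1)) * es A k y * es A (l - 1) y) \<ge> 0"
    proof (cases "l = 0")
      case True
      then show ?thesis using sk sl kc n_def by simp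
    next
      case False
      then have l1: "1 \<le> l" by simp
      have C: "real k * real (card A - l + 1) * (es A k y * es A (l - 1) y)
         \<le> real l * real (card A - k + 1) * (es A l y * es A (k - 1) y)"
        by (rule newton_chain[OF fA G kc l1]) (use lk in auto)
      have e1: "real (card A - l + 1) = real n - real (l - 1)" using l1 lk kc n_def by (simp add: of_nat_diff)
      have e2: "real (card A - k + 1) = real n - real k + 1" using kc n_def by (simp add: of_nat_diff)
      have kp: "real k > 0" using lk by simp
      have sl1: "es A (l - 1) y > 0" using Gam_pos[OF fA G, of "l - 1"] lk by simp
      have C': "real k * ((real n - real (l - 1)) * es A k y * es A (l - 1) y)
          \<le> real l * (real n - real k + 1) * (es A (k - 1) y * es A l y)"
        using C unfolding e1 e2 by (simp add: ac_simps)
      have "(real n - real (l - 1)) * es A k y * es A (l - 1) y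
          \<le> real l * (real n - real k + 1) * (es A (k - 1) y * es A l y) / real k"
        by (metis C' kp mult.commute pos_le_divide_eq)
      also have "\<dots> = (real n - real k + 1) * (real l / real k) * (es A (k - 1) y * es A l y)"
        using kp by (simp add: field_simps)
      finally have "(real n - real (l - 1)) * es A k y * es A (l - 1) y
          \<le> (real n - real k + 1) * (real l / real k) * (es A (k - 1) y * es A l y)" .
      moreover have "(real n - real (l - 1)) * es A k y * es A (l - 1) y \<ge> 0"
        using sk sl1 lk kc n_def by simp
      ultimately show ?thesis using False by simp
    qed
    then show "(if l = 0 then 0 else (real n - real (l - 1)) * es A k y * es A (l - 1) y)
     \<le> (real n - real k + 1) * (real l / real k) * (es A (k - 1) y * es A l y)"
      and "(if l = 0 then 0 else (real n - real (l - 1)) * es A k y * es A (l - 1) y) \<ge> 0" by auto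
  qed
  define L where "L = es A l y"
  define K1 where "K1 = es A (k - 1) y"
  define c where "c = real n - real k + 1"
  define X where "X = (if l = 0 then 0 else (real n - real (l - 1)) * es A k y * es A (l - 1) y)"
  define q where "q = real l / real k"
  have Lp: "L > 0" using sl L_def by simp
  have sq: "L^2 > 0" using Lp by simp
  have E': "S * L^2 = c * K1 * L - X" using E unfolding L_def K1_def c_def X_def by simp
  have T': "X \<le> c * q * (K1 * L)" using T unfolding L_def K1_def c_def X_def q_def .
  have T0': "X \<ge> 0" using T0 unfolding X_def .
  have r1: "(c * (1 - q) * (K1 / L)) * L^2 = c * K1 * L - c * q * (K1 * L)"
    using Lp by (simp add: field_simps power2_eq_square)
  have "(c * (1 - q) * (K1 / L)) * L^2 \<le> S * L^2" using E' T' r1 by linarith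
  then have "c * (1 - q) * (K1 / L) \<le> S" by (rule iffD1[OF mult_le_cancel_right_pos[OF sq]])
  then show "(\<Sum>p\<in>A. fp A k l y p) \<ge> (real (card A) - real k + 1) * (1 - real l / real k) * (es A (k - 1) y / es A l y)"
    unfolding S_def n_def c_def q_def K1_def L_def by simp
  have r2: "(c * (K1 / L)) * L^2 = c * K1 * L"
    using Lp by (simp add: field_simps power2_eq_square)
  have "S * L^2 \<le> (c * (K1 / L)) * L^2" using E' T0' r2 by linarith
  then have "S \<le> c * (K1 / L)" by (rule iffD1[OF mult_le_cancel_right_pos[OF sq]])
  then show "(\<Sum>p\<in>A. fp A k l y p) \<le> (real (card A) - real k + 1) * (es A (k - 1) y / es A l y)"
    unfolding S_def n_def c_def K1_def L_def by simp
qed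

lemma ratio_bound:
  assumes fA: "finite A" and G: "Gam A k y" and lk: "l < k" and kc: "k \<le> card A"
    and m: "es A k y / es A l y \<ge> m"
  shows "es A (k - 1) y / es A l y \<ge> min 1 m"
proof -
  have pos: "\<And>j. j \<le> k \<Longrightarrow> es A j y > 0" using Gam_pos[OF fA G] by simp
  show ?thesis
  proof (cases "es A k y \<ge> es A (k - 1) y")
    case True
    have mono: "es A j y \<ge> es A l y" if "l \<le> j" "j \<le> k - 1" for j
      using that
    proof (induction j rule: dec_induct)
      case base then show ?case by simp
    next
      case (step j)
      have C: "es A k y * es A (Suc j - 1) y \<le> es A (Suc j) y * es A (k - 1) y"
        by (rule newton_chain_unnorm[OF fA G kc]) (use step in auto)
      have jk: "j \<le> k" using step by simp
      have "es A (k - 1) y * es A j y \<le> es A k y * es A j y"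
        using True pos[OF jk] by (intro mult_right_mono) auto
      also have "\<dots> \<le> es A (k - 1) y * es A (Suc j) y" using C by (simp add: mult.commute)
      finally have "es A j y \<le> es A (Suc j) y" using pos[of "k - 1"] by simp
      then show ?case using step by simp
    qed
    have "es A (k - 1) y \<ge> es A l y" using mono lk by simp
    then have "es A (k - 1) y / es A l y \<ge> 1" using pos lk by simp
    then show ?thesis by simp
  next
    case False
    have "es A l y > 0" using pos[of l] lk by simp
    then have "es A (k - 1) y / es A l y \<ge> es A k y / es A l y"
      using False by (intro divide_right_mono) auto
    then show ?thesis using m by simp
  qed
qed

lemma alg1: "(L::real) \<noteq> 0 \<Longrightarrow> c \<noteq> 0 \<Longrightarrow> a * (K * L / c) = (a / c * (K / L)) * L^2"
  by (simp add: field_simps power2_eq_square)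

lemma alg2: "(M::real) \<noteq> 0 \<Longrightarrow> c \<noteq> 0 \<Longrightarrow> a / (c * M) * (M * R) = a / c * R"
  by (simp add: field_simps)

theorem lemma3p1:
  fixes n k l :: nat and \<theta> \<mu> :: real
  assumes "l < k" "k < n" "\<theta> \<ge> \<mu>" "\<theta> > 0"
  shows "(\<exists>c1>0. \<forall>\<kappa>. lam \<theta> \<mu> n \<kappa> \<in> Gamma n k \<and> (\<forall>i j. i \<le> j \<and> j < n \<longrightarrow> \<kappa> j \<le> \<kappa> i)
            \<longrightarrow> Fii n k l \<theta> \<mu> \<kappa> 0 \<ge> c1 * (\<Sum>i<n. Fii n k l \<theta> \<mu> \<kappa> i))
       \<and> (\<forall>m>0. \<exists>c2>0. \<forall>\<kappa>. lam \<theta> \<mu> n \<kappa> \<in> Gamma n k \<and> (\<forall>i j. i \<le> j \<and> j < n \<longrightarrow> \<kappa> j \<le> \<kappa> i)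
            \<and> Fq n k l \<theta> \<mu> \<kappa> \<ge> m \<longrightarrow> (\<Sum>i<n. Fii n k l \<theta> \<mu> \<kappa> i) \<ge> c2)"
proof -
  note lk = assms(1) and kn = assms(2) and tm = assms(3) and t0 = assms(4)
  define A where "A = {..<n}"
  have fA: "finite A" and cA: "card A = n" using A_def by auto
  have k1: "1 \<le> k" using lk by simp
  have kc: "k + 1 \<le> card A" using kn cA by simp
  have n2: "n \<ge> 2" using lk kn by simp
  define c0 where "c0 = (real n - real k + 1) * (1 - real l / real k)"
  have q1: "1 - real l / real k > 0" using lk by (simp add: field_simps)
  have nk: "real n - real k + 1 > 0" using kn by simp
  have c0p: "c0 > 0" unfolding c0_def using q1 nk by simp
  define C1 where "C1 = CLT n (k - 1)"
  define C2 where "C2 = CLT n l"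
  have C1p: "C1 \<ge> 1"
  proof (cases "k - 1 = 0")
    case True then show ?thesis unfolding C1_def CLT_def by simp
  next
    case False then show ?thesis unfolding C1_def using consts_ok(5)[of "k - 1" n] kn by simp
  qed
  have C2p: "C2 \<ge> 1"
  proof (cases "l = 0")
    case True then show ?thesis unfolding C2_def CLT_def by simp
  next
    case False then show ?thesis unfolding C2_def using consts_ok(5)[of l n] kn lk by simp
  qed
  define c3 where "c3 = (1 - real l / real k) / (C1 * C2 * (real n - real k + 1))"
  have c3p: "c3 > 0" unfolding c3_def using q1 nk C1p C2p by simp
  define N where "N = real n * \<theta> - \<mu>"
  have Np: "N > 0"
  proof -
    have "real n * \<theta> \<ge> 2 * \<theta>" using n2 t0 by (simp add: mult_right_mono)
    then show ?thesis unfolding N_def using tm t0 by linarith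
  qed
  define S where "S \<kappa> = (\<Sum>p\<in>A. fp A k l (lam \<theta> \<mu> n \<kappa>) p)" for \<kappa>
  have common: "Gam A k (lam \<theta> \<mu> n \<kappa>) \<and> (\<forall>i<n. Fii n k l \<theta> \<mu> \<kappa> i = \<theta> * S \<kappa> - \<mu> * fp A k l (lam \<theta> \<mu> n \<kappa>) i)
      \<and> (\<Sum>i<n. Fii n k l \<theta> \<mu> \<kappa> i) = N * S \<kappa>"
    if G0: "lam \<theta> \<mu> n \<kappa> \<in> Gamma n k" for \<kappa>
  proof -
    have G: "Gam A k (lam \<theta> \<mu> n \<kappa>)" using G0 unfolding Gamma_def Gam_def A_def esym_es by simp
    have F: "\<forall>i<n. Fii n k l \<theta> \<mu> \<kappa> i = \<theta> * S \<kappa> - \<mu> * fp A k l (lam \<theta> \<mu> n \<kappa>) i"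
      using Fii_formula[OF lk _ G[unfolded A_def]] unfolding S_def A_def by simp
    have "(\<Sum>i<n. Fii n k l \<theta> \<mu> \<kappa> i) = (\<Sum>i\<in>A. \<theta> * S \<kappa> - \<mu> * fp A k l (lam \<theta> \<mu> n \<kappa>) i)"
      using F unfolding A_def by (intro sum.cong) auto
    also have "\<dots> = real n * \<theta> * S \<kappa> - \<mu> * S \<kappa>"
      by (simp add: sum_subtractf sum_distrib_left[symmetric] cA S_def)
    finally have sumF: "(\<Sum>i<n. Fii n k l \<theta> \<mu> \<kappa> i) = real n * \<theta> * S \<kappa> - \<mu> * S \<kappa>" .
    have "(\<Sum>i<n. Fii n k l \<theta> \<mu> \<kappa> i) = N * S \<kappa>" unfolding N_def sumF by (simp add: algebra_simps)
    then show ?thesis using G F by blast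
  qed
  have part1: "\<exists>c1>0. \<forall>\<kappa>. lam \<theta> \<mu> n \<kappa> \<in> Gamma n k \<and> (\<forall>i j. i \<le> j \<and> j < n \<longrightarrow> \<kappa> j \<le> \<kappa> i)
            \<longrightarrow> Fii n k l \<theta> \<mu> \<kappa> 0 \<ge> c1 * (\<Sum>i<n. Fii n k l \<theta> \<mu> \<kappa> i)"
  proof (intro exI[of _ "if \<mu> \<le> 0 then \<theta> / N else \<mu> * c3 / N"] conjI allI impI)
    show "0 < (if \<mu> \<le> 0 then \<theta> / N else \<mu> * c3 / N)" using t0 Np c3p by auto
    fix \<kappa>
    assume H: "lam \<theta> \<mu> n \<kappa> \<in> Gamma n k \<and> (\<forall>i j. i \<le> j \<and> j < n \<longrightarrow> \<kappa> j \<le> \<kappa> i)"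
    define y where "y = lam \<theta> \<mu> n \<kappa>"
    note CC = common[OF conjunct1[OF H], folded y_def]
    have C: "Gam A k y" "\<forall>i<n. Fii n k l \<theta> \<mu> \<kappa> i = \<theta> * S \<kappa> - \<mu> * fp A k l y i"
      "(\<Sum>i<n. Fii n k l \<theta> \<mu> \<kappa> i) = N * S \<kappa>"
      using CC by (rule conjunct1, rule conjunct1[OF conjunct2], rule conjunct2[OF conjunct2])
    have Sy: "S \<kappa> = (\<Sum>p\<in>A. fp A k l y p)" unfolding S_def y_def by simp
    have pos: "\<And>j. j \<le> k \<Longrightarrow> es A j y > 0" using Gam_pos[OF fA C(1)] by simp
    have SB: "S \<kappa> \<ge> c0 * (es A (k - 1) y / es A l y)" "S \<kappa> \<le> (real n - real k + 1) * (es A (k - 1) y / es A l y)"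
      using S_bounds[OF fA C(1) lk] kc cA unfolding Sy c0_def by auto
    have sk1: "es A (k - 1) y > 0" by (rule pos) simp
    have sl0: "es A l y > 0" by (rule pos) (use lk in simp)
    have rpos: "es A (k - 1) y / es A l y > 0" using sk1 sl0 by (rule divide_pos_pos)
    have "c0 * (es A (k - 1) y / es A l y) > 0" using c0p rpos by (rule mult_pos_pos)
    then have S0: "S \<kappa> \<ge> 0" using SB(1) by linarith
    have A0: "0 \<in> A" "1 \<in> A" using A_def n2 by auto
    have fp0: "fp A k l y 0 \<ge> 0" by (rule fp_nonneg[OF fA A0(1) C(1) lk kc])
    have F0: "Fii n k l \<theta> \<mu> \<kappa> 0 = \<theta> * S \<kappa> - \<mu> * fp A k l y 0" using C(2) n2 by simp
    show "(if \<mu> \<le> 0 then \<theta> / N else \<mu> * c3 / N) * (\<Sum>i<n. Fii n k l \<theta> \<mu> \<kappa> i) \<le> Fii n k l \<theta> \<mu> \<kappa> 0"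
    proof (cases "\<mu> \<le> 0")
      case True
      have "(\<theta> / N) * (N * S \<kappa>) = \<theta> * S \<kappa>" using Np by simp
      moreover have "\<mu> * fp A k l y 0 \<le> 0" using True fp0 by (rule mult_nonpos_nonneg)
      ultimately show ?thesis using True C(3) F0 by simp
    next
      case False
      then have mu0: "\<mu> > 0" by simp
      have ord: "\<And>i j. i \<le> j \<Longrightarrow> j < n \<Longrightarrow> \<kappa> j \<le> \<kappa> i" using H by blast
      have ya: "y 0 \<le> y 1"
        unfolding y_def lam_def using ord[of 0 1] n2 mu0 by (simp add: mult_left_mono)
      have yb: "\<forall>p\<in>A. p \<noteq> 0 \<longrightarrow> p \<noteq> 1 \<longrightarrow> y 1 \<le> y p"
      proof (intro ballI impI)
        fix p assume p: "p \<in> A" "p \<noteq> 0" "p \<noteq> 1"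
        then have "\<kappa> p \<le> \<kappa> 1" using ord[of 1 p] A_def by simp
        then show "y 1 \<le> y p" unfolding y_def lam_def using mu0 by (simp add: mult_left_mono)
      qed
      have LT1: "es A (k - 1) y \<le> C1 * es (A - {1}) (k - 1) y"
        unfolding C1_def by (rule LT[OF fA cA C(1) _ A0 _ ya yb]) (use kn lk in auto)
      have LT2: "es A l y \<le> C2 * es (A - {1}) l y"
        unfolding C2_def by (rule LT[OF fA cA C(1) _ A0 _ ya yb]) (use kn lk in auto)
      have fc: "fp A k l y 1 * (es A l y)^2 \<ge> (1 - real l / real k) * (es (A - {1}) (k - 1) y * es (A - {1}) l y)"
        "es (A - {1}) (k - 1) y > 0" "es (A - {1}) l y > 0"
        using fcore[OF fA A0(2) C(1) lk kc] by auto
      have sl: "es A l y > 0" "es A (k - 1) y > 0" using sl0 sk1 by auto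
      have "es A (k - 1) y * es A l y \<le> (C1 * es (A - {1}) (k - 1) y) * (C2 * es (A - {1}) l y)"
        using LT1 LT2 sl by (intro mult_mono) auto
      then have "es A (k - 1) y * es A l y / (C1 * C2) \<le> es (A - {1}) (k - 1) y * es (A - {1}) l y"
        using C1p C2p by (simp add: divide_le_eq ac_simps)
      then have "(1 - real l / real k) * (es A (k - 1) y * es A l y / (C1 * C2)) \<le> fp A k l y 1 * (es A l y)^2"
        using fc(1) q1 by (meson less_imp_le mult_left_mono order_trans)
      moreover have "(1 - real l / real k) * (es A (k - 1) y * es A l y / (C1 * C2))
           = ((1 - real l / real k) / (C1 * C2) * (es A (k - 1) y / es A l y)) * (es A l y)^2"
        using sl C1p C2p by (intro alg1) auto
      ultimately have "((1 - real l / real k) / (C1 * C2) * (es A (k - 1) y / es A l y)) * (es A l y)^2 \<le> fp A k l y 1 * (es A l y)^2"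
        by simp
      moreover have "(es A l y)^2 > 0" using sl by simp
      ultimately have fp1a: "(1 - real l / real k) / (C1 * C2) * (es A (k - 1) y / es A l y) \<le> fp A k l y 1"
        by (meson mult_le_cancel_right_pos)
      have "c3 * S \<kappa> \<le> c3 * ((real n - real k + 1) * (es A (k - 1) y / es A l y))"
        using SB(2) c3p by (intro mult_left_mono) auto
      also have "\<dots> = (1 - real l / real k) / (C1 * C2) * (es A (k - 1) y / es A l y)"
        unfolding c3_def using nk C1p C2p by (intro alg2) auto
      finally have fp1: "c3 * S \<kappa> \<le> fp A k l y 1" using fp1a by simp
      have sum1: "fp A k l y 1 \<le> (\<Sum>p\<in>A - {0}. fp A k l y p)"
        by (rule member_le_sum) (use A0 fA fp_nonneg[OF fA _ C(1) lk kc] in auto)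
      have sum0: "S \<kappa> = fp A k l y 0 + (\<Sum>p\<in>A - {0}. fp A k l y p)"
        unfolding Sy using sum.remove[OF fA A0(1)] by simp
      have h1: "Fii n k l \<theta> \<mu> \<kappa> 0 = (\<theta> - \<mu>) * S \<kappa> + \<mu> * (\<Sum>p\<in>A - {0}. fp A k l y p)"
        using F0 sum0 by (simp add: algebra_simps)
      have h2: "(\<theta> - \<mu>) * S \<kappa> \<ge> 0" using tm S0 by simp
      have h3: "\<mu> * (\<Sum>p\<in>A - {0}. fp A k l y p) \<ge> \<mu> * (c3 * S \<kappa>)"
        using sum1 fp1 mu0 by (intro mult_left_mono) auto
      have h4: "(\<mu> * c3 / N) * (N * S \<kappa>) = \<mu> * (c3 * S \<kappa>)" using Np by simp
      have "(if \<mu> \<le> 0 then \<theta> / N else \<mu> * c3 / N) * (\<Sum>i<n. Fii n k l \<theta> \<mu> \<kappa> i) = \<mu> * (c3 * S \<kappa>)"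
        using False C(3) h4 by simp
      then show ?thesis using h1 h2 h3 by linarith
    qed
  qed
  have part2: "\<forall>m>0. \<exists>c2>0. \<forall>\<kappa>. lam \<theta> \<mu> n \<kappa> \<in> Gamma n k \<and> (\<forall>i j. i \<le> j \<and> j < n \<longrightarrow> \<kappa> j \<le> \<kappa> i)
            \<and> Fq n k l \<theta> \<mu> \<kappa> \<ge> m \<longrightarrow> (\<Sum>i<n. Fii n k l \<theta> \<mu> \<kappa> i) \<ge> c2"
  proof (intro allI impI)
    fix m :: real assume m0: "m > 0"
    show "\<exists>c2>0. \<forall>\<kappa>. lam \<theta> \<mu> n \<kappa> \<in> Gamma n k \<and> (\<forall>i j. i \<le> j \<and> j < n \<longrightarrow> \<kappa> j \<le> \<kappa> i)
            \<and> Fq n k l \<theta> \<mu> \<kappa> \<ge> m \<longrightarrow> (\<Sum>i<n. Fii n k l \<theta> \<mu> \<kappa> i) \<ge> c2"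
    proof (intro exI[of _ "N * c0 * min 1 m"] conjI allI impI)
      show "0 < N * c0 * min 1 m" using Np c0p m0 by simp
      fix \<kappa>
      assume H: "lam \<theta> \<mu> n \<kappa> \<in> Gamma n k \<and> (\<forall>i j. i \<le> j \<and> j < n \<longrightarrow> \<kappa> j \<le> \<kappa> i) \<and> Fq n k l \<theta> \<mu> \<kappa> \<ge> m"
      define y where "y = lam \<theta> \<mu> n \<kappa>"
      note CC = common[OF conjunct1[OF H], folded y_def]
      have C: "Gam A k y" "(\<Sum>i<n. Fii n k l \<theta> \<mu> \<kappa> i) = N * S \<kappa>"
        using CC by (rule conjunct1, rule conjunct2[OF conjunct2])
      have Sy: "S \<kappa> = (\<Sum>p\<in>A. fp A k l y p)" unfolding S_def y_def by simp
      have SB: "S \<kappa> \<ge> c0 * (es A (k - 1) y / es A l y)"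
        using S_bounds(1)[OF fA C(1) lk] kc cA unfolding Sy c0_def by auto
      have Fq: "es A k y / es A l y \<ge> m" using H unfolding Fq_def esym_es y_def A_def by simp
      have R: "es A (k - 1) y / es A l y \<ge> min 1 m"
        by (rule ratio_bound[OF fA C(1) lk _ Fq]) (use kc in simp)
      have "N * c0 * min 1 m \<le> N * c0 * (es A (k - 1) y / es A l y)"
        using R Np c0p by (intro mult_left_mono) auto
      also have "\<dots> = N * (c0 * (es A (k - 1) y / es A l y))" by (simp only: mult.assoc)
      also have "\<dots> \<le> N * S \<kappa>" using SB Np by (intro mult_left_mono) auto
      finally show "N * c0 * min 1 m \<le> (\<Sum>i<n. Fii n k l \<theta> \<mu> \<kappa> i)" using C(2) by simp
    qed
  qed
  show ?thesis using part1 part2 by blast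
qed

end
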